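(* For all $\eta\in\{0,1\}^{\mathbb Z}$, all $n\ge1$, all $y_1\le y_2\le\dots\le y_{2n}$ in $\mathbb Z$ and all $t\ge0$, \[ \mathbf E_\eta[\Sigma_y(\eta_t)]=\mathrm{Pf}\big(K^{(2n)}(t,y)\big), \] where $K^{(2n)}(t,y)$ is the antisymmetric $2n\times2n$ matrix with entries $K_t(y_i,y_j)$ for $i<j$, and $K_t(y,z)=\mathbf E_\eta[\sigma_{y,z}(\eta_t)]$ for $y\le z$.
   Context: Fix $\theta\in[0,1]$ and uniformly bounded nonnegative rates $(p_x,q_x)_{x\in\mathbb Z}$. $(\eta_t)$ is the Markov process on $\{0,1\}^{\mathbb Z}$ in which particles perform independent nearest-neighbour random walks, jumping $x\to x-1$ at rate $q_x$ and $x-1\to x$ at rate $p_x$, and when a particle jumps onto an occupied site the two particles annihilate with probability $\theta$ and coalesce into one with probability $1-\theta$ (generator $\mathcal LF(\eta)=\sum_xq_x(\theta F(\eta^a_{x,x-1})+(1-\theta)F(\eta^c_{x,x-1})-F(\eta))+\sum_xp_x(\theta F(\eta^a_{x-1,x})+(1-\theta)F(\eta^c_{x-1,x})-F(\eta))$, where $\eta^a_{x,y},\eta^c_{x,y}$ agree with $\eta$ off $\{x,y\}$, vanish at $x$, and have value $(\eta(x)+\eta(y))\bmod2$, resp. $\min\{1,\eta(x)+\eta(y)\}$, at $y$). $\mathbf E_\eta$ is expectation from initial condition $\eta$. For $y\le z$, $\eta[y,z)=\sum_{y\le x<z}\eta(x)$, $\sigma_{y,z}(\eta)=(-\theta)^{\eta[y,z)}$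 with $0^0=1$, and $\Sigma_y(\eta)=\prod_{i=1}^n\sigma_{y_{2i-1},y_{2i}}(\eta)$. $\mathrm{Pf}(A)=\frac{1}{2^nn!}\sum_{\pi\in S_{2n}}\mathrm{sgn}(\pi)\prod_{i=1}^na_{\pi(2i-1)\pi(2i)}$. *)

theory Defs
  imports "HOL-Analysis.Analysis" "HOL-Combinatorics.Permutations"
begin

text \<open>Configurations in {0,1}^Z: eta x = True means site x is occupied.
  The product topology on int => bool comes from HOL-Analysis (Function_Topology).\<close>

type_synonym config = "int \<Rightarrow> bool"

definition eta_a :: "config \<Rightarrow> int \<Rightarrow> int \<Rightarrow> config" where
  "eta_a \<eta> x y = (\<eta>(x := False))(y := (\<eta> x \<noteq> \<eta> y))"

definition eta_c :: "config \<Rightarrow> int \<Rightarrow> int \<Rightarrow> config" where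
  "eta_c \<eta> x y = (\<eta>(x := False))(y := (\<eta> x \<or> \<eta> y))"

text \<open>The generator L applied to F (meaningful for local F, where the sum has finite support).\<close>
definition gen :: "real \<Rightarrow> (int \<Rightarrow> real) \<Rightarrow> (int \<Rightarrow> real) \<Rightarrow> (config \<Rightarrow> real) \<Rightarrow> config \<Rightarrow> real" where
  "gen \<theta> p q F \<eta> =
     (\<Sum>\<^sub>\<infinity>x\<in>(UNIV::int set).
        q x * (\<theta> * F (eta_a \<eta> x (x - 1)) + (1 - \<theta>) * F (eta_c \<eta> x (x - 1)) - F \<eta>)
      + p x * (\<theta> * F (eta_a \<eta> (x - 1) x) + (1 - \<theta>) * F (eta_c \<eta> (x - 1) x) - F \<eta>))"

definition local_fun :: "(config \<Rightarrow> real) \<Rightarrow> bool" where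
  "local_fun F \<longleftrightarrow> (\<exists>A. finite A \<and> (\<forall>\<eta> \<xi>. (\<forall>x\<in>A. \<eta> x = \<xi> x) \<longrightarrow> F \<eta> = F \<xi>))"

text \<open>S is the (Feller) Markov semigroup of the process with generator L:
  S t F \<eta> = E_\<eta>[F(\<eta>_t)] for continuous F. The conditions below say that S is a
  strongly continuous positive conservative (Markov) semigroup on C({0,1}^Z) whose
  generator extends L on local functions; since the local functions form a core for the
  closure of L (bounded rates, nearest-neighbour), this determines S uniquely.\<close>
definition markov_semigroup_gen ::
  "real \<Rightarrow> (int \<Rightarrow> real) \<Rightarrow> (int \<Rightarrow> real) \<Rightarrow> (real \<Rightarrow> (config \<Rightarrow> real) \<Rightarrow> config \<Rightarrow> real) \<Rightarrow> bool" where
  "markov_semigroup_gen \<theta> p q S \<longleftrightarrow>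
     (\<forall>t\<ge>0. \<forall>F. continuous_on UNIV F \<longrightarrow> continuous_on UNIV (S t F)) \<and>
     (\<forall>F. continuous_on UNIV F \<longrightarrow> S 0 F = F) \<and>
     (\<forall>s\<ge>0. \<forall>t\<ge>0. \<forall>F. continuous_on UNIV F \<longrightarrow> S (s + t) F = S s (S t F)) \<and>
     (\<forall>t\<ge>0. \<forall>F G a b. continuous_on UNIV F \<longrightarrow> continuous_on UNIV G \<longrightarrow>
         S t (\<lambda>\<eta>. a * F \<eta> + b * G \<eta>) = (\<lambda>\<eta>. a * S t F \<eta> + b * S t G \<eta>)) \<and>
     (\<forall>t\<ge>0. \<forall>F. continuous_on UNIV F \<longrightarrow> (\<forall>\<eta>. F \<eta> \<ge> 0) \<longrightarrow> (\<forall>\<eta>. S t F \<eta> \<ge> 0)) \<and>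
     (\<forall>t\<ge>0. S t (\<lambda>_. 1) = (\<lambda>_. 1)) \<and>
     (\<forall>F. continuous_on UNIV F \<longrightarrow>
         (\<forall>\<epsilon>>0. \<exists>\<delta>>0. \<forall>t. 0 < t \<and> t < \<delta> \<longrightarrow> (\<forall>\<eta>. \<bar>S t F \<eta> - F \<eta>\<bar> < \<epsilon>))) \<and>
     (\<forall>F. local_fun F \<longrightarrow>
         (\<forall>\<epsilon>>0. \<exists>\<delta>>0. \<forall>t. 0 < t \<and> t < \<delta> \<longrightarrow>
            (\<forall>\<eta>. \<bar>(S t F \<eta> - F \<eta>) / t - gen \<theta> p q F \<eta>\<bar> < \<epsilon>)))"

text \<open>eta[y,z) and sigma_{y,z}(eta) = (-theta)^{eta[y,z)} (with 0^0 = 1).\<close>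
definition count_int :: "config \<Rightarrow> int \<Rightarrow> int \<Rightarrow> nat" where
  "count_int \<eta> y z = card {x. y \<le> x \<and> x < z \<and> \<eta> x}"

definition sigma :: "real \<Rightarrow> int \<Rightarrow> int \<Rightarrow> config \<Rightarrow> real" where
  "sigma \<theta> y z \<eta> = (- \<theta>) ^ count_int \<eta> y z"

text \<open>Sigma_y(eta) = prod_{i=1}^n sigma_{y_{2i-1},y_{2i}}(eta); indices shifted to 0..2n-1.\<close>
definition Sigma_prod :: "real \<Rightarrow> nat \<Rightarrow> (nat \<Rightarrow> int) \<Rightarrow> config \<Rightarrow> real" where
  "Sigma_prod \<theta> n y \<eta> = (\<Prod>i<n. sigma \<theta> (y (2 * i)) (y (2 * i + 1)) \<eta>)"

definition pfaffian :: "nat \<Rightarrow> (nat \<Rightarrow> nat \<Rightarrow> real) \<Rightarrow> real" where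
  "pfaffian n A = (1 / (2 ^ n * fact n)) *
     (\<Sum>\<pi> | \<pi> permutes {0..<2 * n}. of_int (sign \<pi>) * (\<Prod>i<n. A (\<pi> (2 * i)) (\<pi> (2 * i + 1))))"

end

theory Submission
  imports Defs
begin

definition pfs :: "nat \<Rightarrow> (nat \<Rightarrow> nat \<Rightarrow> real) \<Rightarrow> real" where
  "pfs n A = (\<Sum>\<pi> | \<pi> permutes {0..<2 * n}. of_int (sign \<pi>) * (\<Prod>i<n. A (\<pi> (2 * i)) (\<pi> (2 * i + 1))))"

lemma pfaffian_pfs: "pfaffian n A = pfs n A / (2 ^ n * fact n)"
  by (simp add: pfaffian_def pfs_def)

lemma perm_sign_mult:
  assumes "\<rho> permutes S" "\<pi> permutes S" "finite S"
  shows "sign (\<rho> \<circ> \<pi>) = sign \<rho> * sign \<pi>"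
  using assms by (meson permutation_permutes sign_compose)

lemma bij_comp_left:
  assumes "\<rho> permutes S"
  shows "bij_betw ((\<circ>) \<rho>) {\<pi>. \<pi> permutes S} {\<pi>. \<pi> permutes S}"
proof (rule bij_betw_byWitness[where f'="(\<circ>) (inv \<rho>)"])
  show "\<forall>a\<in>{\<pi>. \<pi> permutes S}. inv \<rho> \<circ> (\<rho> \<circ> a) = a"
    using assms by (simp add: o_assoc permutes_inv_o(2))
  show "\<forall>a\<in>{\<pi>. \<pi> permutes S}. \<rho> \<circ> (inv \<rho> \<circ> a) = a"
    using assms by (simp add: o_assoc permutes_inv_o(1))
  show "(\<circ>) \<rho> ` {\<pi>. \<pi> permutes S} \<subseteq> {\<pi>. \<pi> permutes S}"
    using assms permutes_compose by blast
  show "(\<circ>) (inv \<rho>) ` {\<pi>. \<pi> permutes S} \<subseteq> {\<pi>. \<pi> permutes S}"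
    using assms permutes_compose permutes_inv by blast
qed

lemma bij_comp_right:
  assumes "\<rho> permutes S"
  shows "bij_betw (\<lambda>\<pi>. \<pi> \<circ> \<rho>) {\<pi>. \<pi> permutes S} {\<pi>. \<pi> permutes S}"
proof (rule bij_betw_byWitness[where f'="\<lambda>\<pi>. \<pi> \<circ> inv \<rho>"])
  show "\<forall>a\<in>{\<pi>. \<pi> permutes S}. a \<circ> \<rho> \<circ> inv \<rho> = a"
    using assms by (simp add: o_assoc[symmetric] permutes_inv_o(1))
  show "\<forall>a\<in>{\<pi>. \<pi> permutes S}. a \<circ> inv \<rho> \<circ> \<rho> = a"
    using assms by (simp add: o_assoc[symmetric] permutes_inv_o(2))
  show "(\<lambda>\<pi>. \<pi> \<circ> \<rho>) ` {\<pi>. \<pi> permutes S} \<subseteq> {\<pi>. \<pi> permutes S}"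
    using assms permutes_compose by blast
  show "(\<lambda>\<pi>. \<pi> \<circ> inv \<rho>) ` {\<pi>. \<pi> permutes S} \<subseteq> {\<pi>. \<pi> permutes S}"
    using assms permutes_compose permutes_inv by blast
qed

lemma pfs_perm:
  assumes \<rho>: "\<rho> permutes {0..<2*n}"
  shows "pfs n (\<lambda>i j. A (\<rho> i) (\<rho> j)) = of_int (sign \<rho>) * pfs n A"
proof -
  let ?P = "{\<pi>. \<pi> permutes {0..<2*n}}"
  let ?g = "\<lambda>\<pi>. of_int (sign \<pi>) * (\<Prod>i<n. A (\<pi> (2 * i)) (\<pi> (2 * i + 1)))"
  have "pfs n A = sum ?g ?P" by (simp add: pfs_def)
  also have "\<dots> = (\<Sum>\<pi>\<in>?P. ?g (\<rho> \<circ> \<pi>))"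
    by (rule sum.reindex_bij_betw[OF bij_comp_left[OF \<rho>], symmetric])
  finally have e: "pfs n A = (\<Sum>\<pi>\<in>?P. ?g (\<rho> \<circ> \<pi>))" .
  have "of_int (sign \<rho>) * pfs n A = (\<Sum>\<pi>\<in>?P. of_int (sign \<rho>) * ?g (\<rho> \<circ> \<pi>))"
    by (simp add: e sum_distrib_left)
  also have "\<dots> = (\<Sum>\<pi>\<in>?P. of_int (sign \<pi>) * (\<Prod>i<n. A (\<rho> (\<pi> (2 * i))) (\<rho> (\<pi> (2 * i + 1)))))"
  proof (rule sum.cong[OF refl])
    fix \<pi> assume "\<pi> \<in> ?P"
    then have "sign (\<rho> \<circ> \<pi>) = sign \<rho> * sign \<pi>" using perm_sign_mult[OF \<rho>] by auto
    then have "(of_int (sign \<rho>) :: real) * of_int (sign (\<rho> \<circ> \<pi>)) = of_int (sign \<pi>)"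
      by (simp flip: of_int_mult add: mult.assoc[symmetric])
    then show "of_int (sign \<rho>) * ?g (\<rho> \<circ> \<pi>) = of_int (sign \<pi>) * (\<Prod>i<n. A (\<rho> (\<pi> (2 * i))) (\<rho> (\<pi> (2 * i + 1))))"
      by (simp add: mult.assoc[symmetric])
  qed
  finally show ?thesis by (simp add: pfs_def)
qed

lemma sum_involution_zero:
  fixes f :: "'a \<Rightarrow> real"
  assumes "finite X" "\<And>x. x \<in> X \<Longrightarrow> g x \<in> X" "\<And>x. x \<in> X \<Longrightarrow> g (g x) = x"
    "\<And>x. x \<in> X \<Longrightarrow> f (g x) = - f x"
  shows "sum f X = 0"
proof -
  have b: "bij_betw g X X"
    by (rule bij_betw_byWitness[where f'=g]) (use assms in auto)
  have "sum f X = sum (\<lambda>x. f (g x)) X" by (rule sum.reindex_bij_betw[OF b, symmetric])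
  also have "\<dots> = - sum f X" using assms(4) by (simp add: sum_negf)
  finally show ?thesis by simp
qed

lemma sum_bij_eq:
  fixes f :: "'a \<Rightarrow> real"
  assumes "\<And>x. x \<in> X \<Longrightarrow> h x \<in> Y" "\<And>x. x \<in> X \<Longrightarrow> h (h x) = x"
    "\<And>x. x \<in> Y \<Longrightarrow> h x \<in> X" "\<And>x. x \<in> Y \<Longrightarrow> h (h x) = x"
    "\<And>x. x \<in> X \<Longrightarrow> f (h x) = f x"
  shows "sum f X = sum f Y"
proof -
  have b: "bij_betw h X Y"
    by (rule bij_betw_byWitness[where f'=h]) (use assms in auto)
  have "sum f Y = sum (\<lambda>x. f (h x)) X" by (rule sum.reindex_bij_betw[OF b, symmetric])
  also have "\<dots> = sum f X" using assms(5) by simp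
  finally show ?thesis by simp
qed

lemma permutes_perm_less: "\<pi> permutes {0..<(N::nat)} \<Longrightarrow> x < N \<Longrightarrow> \<pi> x < N"
proof -
  assume a: "\<pi> permutes {0..<N}" "x < N"
  have "\<pi> x \<in> {0..<N}" using permutes_in_image[OF a(1), of x] a(2) by simp
  then show ?thesis by simp
qed

lemma sign_perm_fin: "\<pi> permutes {0..<(N::nat)} \<Longrightarrow> permutation \<pi>"
  unfolding permutation_permutes by (rule exI[where x="{0..<N}"]) simp

definition ext2 :: "nat \<Rightarrow> (nat \<Rightarrow> nat) \<Rightarrow> nat \<Rightarrow> nat" where
  "ext2 m \<sigma> = (\<lambda>x. if x \<in> {2..<2*m+2} then \<sigma> (x - 2) + 2 else x)"

definition res2 :: "nat \<Rightarrow> (nat \<Rightarrow> nat) \<Rightarrow> nat \<Rightarrow> nat" where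
  "res2 m \<pi> = (\<lambda>x. if x \<in> {0..<2*m} then \<pi> (x + 2) - 2 else x)"

lemma bij_plus2: "bij_betw (\<lambda>x::nat. x + 2) {0..<2*m} {2..<2*m+2}"
proof -
  have "(\<lambda>x::nat. x + 2) ` {0..<2*m} = {2..<2*m+2}"
    by (simp only: image_add_atLeastLessThan') (simp add: eval_nat_numeral)
  moreover have "inj_on (\<lambda>x::nat. x + 2) {0..<2*m}" by (simp add: inj_on_def)
  ultimately show ?thesis unfolding bij_betw_def by blast
qed

lemma bij_minus2: "bij_betw (\<lambda>x::nat. x - 2) {2..<2*m+2} {0..<2*m}"
proof -
  have "(\<lambda>x::nat. x - 2) ` {2..<2*m+2} = {0..<2*m}"
    by (simp only: image_minus_const_atLeastLessThan_nat) simp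
  moreover have "inj_on (\<lambda>x::nat. x - 2) {2..<2*m+2}" by (rule inj_onI) auto
  ultimately show ?thesis unfolding bij_betw_def by blast
qed

lemma ext2_map: "\<sigma> permutes {0..<2*m} \<Longrightarrow> ext2 m \<sigma> = map_permutation {0..<2*m} (\<lambda>x. x + 2) \<sigma>"
proof
  fix x assume s: "\<sigma> permutes {0..<2*m}"
  have im: "(\<lambda>x::nat. x + 2) ` {0..<2*m} = {2..<2*m+2}" using bij_plus2 by (simp add: bij_betw_def)
  show "ext2 m \<sigma> x = map_permutation {0..<2*m} (\<lambda>x. x + 2) \<sigma> x"
  proof (cases "x \<in> {2..<2*m+2}")
    case True
    obtain z where z: "z < 2*m" "x = z + 2" using True by (intro that[of "x-2"]) auto
    have "map_permutation {0..<2*m} (\<lambda>x. x + 2) \<sigma> (z + 2) = \<sigma> z + 2"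
      by (rule map_permutation_apply) (use z in \<open>auto simp: inj_on_def\<close>)
    then show ?thesis using z True by (simp add: ext2_def)
  next
    case False
    then have "x \<notin> (\<lambda>x::nat. x + 2) ` {0..<2*m}" using im by blast
    then show ?thesis using False by (auto simp: ext2_def map_permutation_def restrict_id_def)
  qed
qed

lemma res2_map: "\<pi> permutes {2..<2*m+2} \<Longrightarrow> res2 m \<pi> = map_permutation {2..<2*m+2} (\<lambda>x. x - 2) \<pi>"
proof
  fix x assume s: "\<pi> permutes {2..<2*m+2}"
  have im: "(\<lambda>x::nat. x - 2) ` {2..<2*m+2} = {0..<2*m}" using bij_minus2 by (simp add: bij_betw_def)
  have inj: "inj_on (\<lambda>x::nat. x - 2) {2..<2*m+2}" using bij_minus2 by (simp add: bij_betw_def)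
  show "res2 m \<pi> x = map_permutation {2..<2*m+2} (\<lambda>x. x - 2) \<pi> x"
  proof (cases "x \<in> {0..<2*m}")
    case True
    have "map_permutation {2..<2*m+2} (\<lambda>x. x - 2) \<pi> ((x+2) - 2) = \<pi> (x+2) - 2"
      by (rule map_permutation_apply[OF inj]) (use True in auto)
    then show ?thesis using True by (simp add: res2_def)
  next
    case False
    then have "x \<notin> (\<lambda>x::nat. x - 2) ` {2..<2*m+2}" using im by blast
    then show ?thesis using False by (simp add: res2_def map_permutation_def restrict_id_def)
  qed
qed

abbreviation tr :: "nat \<Rightarrow> nat \<Rightarrow> nat \<Rightarrow> nat" where "tr \<equiv> Transposition.transpose"

lemma swap01_entry:
  fixes A :: "nat \<Rightarrow> nat \<Rightarrow> real"
  assumes rows: "\<And>a. 2 \<le> a \<Longrightarrow> a < N \<Longrightarrow> A 0 a = A 1 a \<and> A a 0 = A a 1"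
    and "a < N" "b < N" "a \<noteq> b" "\<not> (a = 0 \<and> b = 1)" "\<not> (a = 1 \<and> b = 0)"
  shows "A (tr 0 1 a) (tr 0 1 b) = A a b"
proof -
  consider "a \<ge> 2" "b \<ge> 2" | "a < 2" "b \<ge> 2" | "a \<ge> 2" "b < 2" | "a < 2" "b < 2" by linarith
  then show ?thesis
  proof cases
    case 1 then show ?thesis by (simp add: Transposition.transpose_def)
  next
    case 2 then have "a = 0 \<or> a = 1" by auto
    then show ?thesis using rows[of b] 2 assms(3) by (auto simp: Transposition.transpose_def)
  next
    case 3 then have "b = 0 \<or> b = 1" by auto
    then show ?thesis using rows[of a] 3 assms(2) by (auto simp: Transposition.transpose_def)
  next
    case 4 then show ?thesis using assms(4-6) by auto
  qed
qed

lemma pair_swap_perm: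
  fixes i :: nat
  assumes "i \<noteq> 0"
  defines "\<rho> \<equiv> tr 0 (2*i) \<circ> tr 1 (2*i+1)"
  shows "\<rho> (2*j) = 2 * tr 0 i j" "\<rho> (2*j+1) = 2 * tr 0 i j + 1"
    "\<rho> (\<rho> x) = x"
  using assms by (auto simp: Transposition.transpose_def)

lemma pfs_red0:
  fixes A :: "nat \<Rightarrow> nat \<Rightarrow> real"
  assumes rows: "\<And>a. 2 \<le> a \<Longrightarrow> a < 2 * Suc m \<Longrightarrow> A 0 a = A 1 a \<and> A a 0 = A a 1"
    and anti: "A 1 0 = - A 0 1"
  shows "pfs (Suc m) A = 2 * real (Suc m) * (A 0 1 * pfs m (\<lambda>i j. A (i+2) (j+2)))"
proof -
  define n where "n = Suc m"
  define P where "P = {\<pi>. \<pi> permutes {0..<2*n}}"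
  define f where "f \<pi> = of_int (sign \<pi>) * (\<Prod>i<n. A (\<pi> (2 * i)) (\<pi> (2 * i + 1)))" for \<pi>
  define Y where "Y i = {\<pi>\<in>P. \<pi> (2*i) = 0 \<and> \<pi> (2*i+1) = 1}" for i
  define Z where "Z i = {\<pi>\<in>P. \<pi> (2*i) = 1 \<and> \<pi> (2*i+1) = 0}" for i
  define UY where "UY = (\<Union>i\<in>{..<n}. Y i)"
  define UZ where "UZ = (\<Union>i\<in>{..<n}. Z i)"
  define X where "X = P - (UY \<union> UZ)"
  have finP: "finite P" unfolding P_def by (rule finite_permutations) simp
  have YP: "Y i \<subseteq> P" for i unfolding Y_def by auto
  have ZP: "Z i \<subseteq> P" for i unfolding Z_def by auto
  have finY: "finite (Y i)" for i using finP YP finite_subset by blast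
  have finZ: "finite (Z i)" for i using finP ZP finite_subset by blast
  have injP: "\<pi> \<in> P \<Longrightarrow> \<pi> a = \<pi> b \<Longrightarrow> a = b" for \<pi> a b
    unfolding P_def using permutes_inj by (metis injD mem_Collect_eq)
  have lessP: "\<pi> \<in> P \<Longrightarrow> a < 2*n \<Longrightarrow> \<pi> a < 2*n" for \<pi> a
    unfolding P_def using permutes_perm_less by blast
  have signP: "\<pi> \<in> P \<Longrightarrow> permutation \<pi>" for \<pi> unfolding P_def using sign_perm_fin by blast
  have n1: "n \<ge> 1" by (simp add: n_def)
  have sub: "UY \<union> UZ \<subseteq> P" unfolding UY_def UZ_def using YP ZP by blast
  have e0: "sum f P = sum f X + sum f (UY \<union> UZ)"
    unfolding X_def by (rule sum.subset_diff[OF sub finP])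
  have e1: "sum f (UY \<union> UZ) = sum f UY + sum f UZ"
  proof (rule sum.union_disjoint)
    show "finite UY" unfolding UY_def using finY by blast
    show "finite UZ" unfolding UZ_def using finZ by blast
    show "UY \<inter> UZ = {}"
    proof (rule ccontr)
      assume "UY \<inter> UZ \<noteq> {}"
      then obtain \<pi> i j where "\<pi> \<in> Y i" "\<pi> \<in> Z j" unfolding UY_def UZ_def by blast
      then have "\<pi> \<in> P" "\<pi> (2*i) = \<pi> (2*j+1)" unfolding Y_def Z_def by auto
      then have "2*i = 2*j+1" using injP by blast
      then show False by presburger
    qed
  qed
  have e2: "sum f UY = (\<Sum>i<n. sum f (Y i))"
    unfolding UY_def
  proof (rule sum.UNION_disjoint)
    have "Y i \<inter> Y j = {}" if "i \<noteq> j" for i j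
    proof -
      { fix \<pi> assume "\<pi> \<in> Y i" "\<pi> \<in> Y j"
        then have "\<pi> \<in> P" "\<pi> (2*i) = \<pi> (2*j)" by (auto simp: Y_def)
        then have "2*i = 2*j" by (rule injP)
        then have False using that by simp }
      then show ?thesis by blast
    qed
    then show "\<forall>i\<in>{..<n}. \<forall>j\<in>{..<n}. i \<noteq> j \<longrightarrow> Y i \<inter> Y j = {}" by blast
  qed (use finY in auto)
  have e3: "sum f UZ = (\<Sum>i<n. sum f (Z i))"
    unfolding UZ_def
  proof (rule sum.UNION_disjoint)
    have "Z i \<inter> Z j = {}" if "i \<noteq> j" for i j
    proof -
      { fix \<pi> assume "\<pi> \<in> Z i" "\<pi> \<in> Z j"
        then have "\<pi> \<in> P" "\<pi> (2*i) = \<pi> (2*j)" by (auto simp: Z_def)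
        then have "2*i = 2*j" by (rule injP)
        then have False using that by simp }
      then show ?thesis by blast
    qed
    then show "\<forall>i\<in>{..<n}. \<forall>j\<in>{..<n}. i \<noteq> j \<longrightarrow> Z i \<inter> Z j = {}" by blast
  qed (use finZ in auto)
  have e4: "sum f X = 0"
  proof (rule sum_involution_zero[where g = "\<lambda>\<pi>. tr 0 1 \<circ> \<pi>"])
    show "finite X" unfolding X_def using finP by simp
    have tp: "tr 0 1 permutes {0..<2*n}" using n1 by (intro permutes_swap_id) auto
    fix \<pi> assume x: "\<pi> \<in> X"
    then have pP: "\<pi> \<in> P" and nY: "\<And>i. i < n \<Longrightarrow> \<pi> \<notin> Y i" and nZ: "\<And>i. i < n \<Longrightarrow> \<pi> \<notin> Z i"
      unfolding X_def UY_def UZ_def by auto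
    have gP: "tr 0 1 \<circ> \<pi> \<in> P" using pP tp unfolding P_def by (simp add: permutes_compose)
    show "tr 0 1 \<circ> \<pi> \<in> X"
    proof -
      have "tr 0 1 \<circ> \<pi> \<notin> Y i" if "i < n" for i
        using nZ[OF that] pP gP unfolding Y_def Z_def by (auto simp: Transposition.transpose_def split: if_splits)
      moreover have "tr 0 1 \<circ> \<pi> \<notin> Z i" if "i < n" for i
        using nY[OF that] pP gP unfolding Y_def Z_def by (auto simp: Transposition.transpose_def split: if_splits)
      ultimately show ?thesis using gP unfolding X_def UY_def UZ_def by auto
    qed
    show "tr 0 1 \<circ> (tr 0 1 \<circ> \<pi>) = \<pi>" by (simp add: fun_eq_iff)
    have sg: "sign (tr 0 1 \<circ> \<pi>) = - sign \<pi>"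
      using sign_compose[OF permutation_swap_id signP[OF pP]] by (simp add: sign_swap_id)
    have pr: "(\<Prod>i<n. A ((tr 0 1 \<circ> \<pi>) (2 * i)) ((tr 0 1 \<circ> \<pi>) (2 * i + 1)))
           = (\<Prod>i<n. A (\<pi> (2 * i)) (\<pi> (2 * i + 1)))"
    proof (rule prod.cong[OF refl])
      fix i assume "i \<in> {..<n}"
      then have i: "i < n" by simp
      show "A ((tr 0 1 \<circ> \<pi>) (2 * i)) ((tr 0 1 \<circ> \<pi>) (2 * i + 1)) = A (\<pi> (2 * i)) (\<pi> (2 * i + 1))"
        unfolding o_apply
      proof (rule swap01_entry[where N="2*n"])
        show "\<And>a. 2 \<le> a \<Longrightarrow> a < 2 * n \<Longrightarrow> A 0 a = A 1 a \<and> A a 0 = A a 1" using rows n_def by simp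
        show "\<pi> (2 * i) < 2 * n" "\<pi> (2 * i + 1) < 2 * n" using lessP[OF pP] i by auto
        show "\<pi> (2 * i) \<noteq> \<pi> (2 * i + 1)" using injP[OF pP] by fastforce
        show "\<not> (\<pi> (2 * i) = 0 \<and> \<pi> (2 * i + 1) = 1)" using nY[OF i] pP unfolding Y_def by auto
        show "\<not> (\<pi> (2 * i) = 1 \<and> \<pi> (2 * i + 1) = 0)" using nZ[OF i] pP unfolding Z_def by auto
      qed
    qed
    show "f (tr 0 1 \<circ> \<pi>) = - f \<pi>" unfolding f_def sg pr by simp
  qed
  have e5: "sum f (Z i) = sum f (Y i)" if i: "i < n" for i
  proof (rule sum_bij_eq[where h = "\<lambda>\<pi>. \<pi> \<circ> tr (2*i) (2*i+1)"])
    have tp: "tr (2*i) (2*i+1) permutes {0..<2*n}" using i by (intro permutes_swap_id) auto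
    have cP: "\<pi> \<circ> tr (2*i) (2*i+1) \<in> P" if "\<pi> \<in> P" for \<pi>
      using that tp unfolding P_def by (simp add: permutes_compose)
    show "\<pi> \<circ> tr (2*i) (2*i+1) \<in> Y i" if "\<pi> \<in> Z i" for \<pi>
      using that cP unfolding Y_def Z_def by auto
    show "\<pi> \<circ> tr (2*i) (2*i+1) \<in> Z i" if "\<pi> \<in> Y i" for \<pi>
      using that cP unfolding Y_def Z_def by auto
    show "\<pi> \<circ> tr (2*i) (2*i+1) \<circ> tr (2*i) (2*i+1) = \<pi>" for \<pi>
      by (simp add: o_assoc[symmetric] fun_eq_iff)
    then show "\<pi> \<circ> tr (2*i) (2*i+1) \<circ> tr (2*i) (2*i+1) = \<pi>" for \<pi> .
    fix \<pi> assume z: "\<pi> \<in> Z i"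
    then have pP: "\<pi> \<in> P" using ZP by blast
    have sg: "sign (\<pi> \<circ> tr (2*i) (2*i+1)) = - sign \<pi>"
      using sign_compose[OF signP[OF pP] permutation_swap_id] by (simp add: sign_swap_id)
    define F where "F j = A (\<pi> (2 * j)) (\<pi> (2 * j + 1))" for j
    define G where "G j = A ((\<pi> \<circ> tr (2*i) (2*i+1)) (2 * j)) ((\<pi> \<circ> tr (2*i) (2*i+1)) (2 * j + 1))" for j
    have "(\<Prod>j<n. G j) = G i * (\<Prod>j\<in>{..<n}-{i}. G j)" using i by (simp add: prod.remove)
    also have "(\<Prod>j\<in>{..<n}-{i}. G j) = (\<Prod>j\<in>{..<n}-{i}. F j)"
    proof (rule prod.cong[OF refl])
      fix j assume "j \<in> {..<n}-{i}"
      then have "j \<noteq> i" by simp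
      then have "tr (2*i) (2*i+1) (2*j) = 2*j" "tr (2*i) (2*i+1) (2*j+1) = 2*j+1"
        by (auto simp: Transposition.transpose_def)
      then show "G j = F j" unfolding G_def F_def by simp
    qed
    also have "G i = - F i" using z anti unfolding G_def F_def Z_def by simp
    finally have "(\<Prod>j<n. G j) = - F i * (\<Prod>j\<in>{..<n}-{i}. F j)" by simp
    also have "\<dots> = - (\<Prod>j<n. F j)" using i by (simp add: prod.remove)
    finally have "(\<Prod>j<n. G j) = - (\<Prod>j<n. F j)" .
    then show "f (\<pi> \<circ> tr (2*i) (2*i+1)) = f \<pi>"
      unfolding f_def sg using F_def G_def by simp
  qed
  have e6: "sum f (Y i) = sum f (Y 0)" if i: "i < n" for i
  proof (cases "i = 0")
    case False
    define \<rho> where "\<rho> = tr 0 (2*i) \<circ> tr 1 (2*i+1)"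
    have r: "\<rho> (2*j) = 2 * tr 0 i j" "\<rho> (2*j+1) = 2 * tr 0 i j + 1" "\<rho> (\<rho> x) = x" for j x
      unfolding \<rho>_def using pair_swap_perm[OF False] by auto
    have rp: "\<rho> permutes {0..<2*n}" unfolding \<rho>_def using i
      by (intro permutes_compose permutes_swap_id) auto
    have sr: "sign \<rho> = 1" unfolding \<rho>_def using False
      by (simp add: sign_compose permutation_swap_id sign_swap_id)
    have cP: "\<pi> \<circ> \<rho> \<in> P" if "\<pi> \<in> P" for \<pi>
      using that rp unfolding P_def by (simp add: permutes_compose)
    have rr: "\<pi> \<circ> \<rho> \<circ> \<rho> = \<pi>" for \<pi> by (simp add: fun_eq_iff r(3))
    have r0: "\<rho> 0 = 2*i" "\<rho> 1 = 2*i+1" using r(1,2)[of 0] by (auto simp: Transposition.transpose_def)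
    have ri: "\<rho> (2*i) = 0" "\<rho> (2*i+1) = 1" using r(1,2)[of i] by (auto simp: Transposition.transpose_def)
    show ?thesis
    proof (rule sum_bij_eq[where h = "\<lambda>\<pi>. \<pi> \<circ> \<rho>"])
      show "\<pi> \<circ> \<rho> \<in> Y 0" if "\<pi> \<in> Y i" for \<pi> using that cP r0 unfolding Y_def by auto
      show "\<pi> \<circ> \<rho> \<in> Y i" if "\<pi> \<in> Y 0" for \<pi> using that cP ri unfolding Y_def by auto
      show "\<pi> \<circ> \<rho> \<circ> \<rho> = \<pi>" for \<pi> by (rule rr)
      then show "\<pi> \<circ> \<rho> \<circ> \<rho> = \<pi>" for \<pi> .
      fix \<pi> assume y: "\<pi> \<in> Y i"
      then have pP: "\<pi> \<in> P" using YP by blast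
      have sg: "sign (\<pi> \<circ> \<rho>) = sign \<pi>"
        using sign_compose[OF signP[OF pP] sign_perm_fin[OF rp]] sr by simp
      have tpi: "bij_betw (tr 0 i) {..<n} {..<n}"
        using i by (intro permutes_imp_bij permutes_swap_id) auto
      have "(\<Prod>j<n. A ((\<pi> \<circ> \<rho>) (2 * j)) ((\<pi> \<circ> \<rho>) (2 * j + 1)))
          = (\<Prod>j<n. (\<lambda>k. A (\<pi> (2 * k)) (\<pi> (2 * k + 1))) (tr 0 i j))"
        by (simp only: o_apply r)
      also have "\<dots> = (\<Prod>j<n. A (\<pi> (2 * j)) (\<pi> (2 * j + 1)))"
        by (rule prod.reindex_bij_betw[OF tpi])
      finally show "f (\<pi> \<circ> \<rho>) = f \<pi>" unfolding f_def sg by simp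
    qed
  qed simp
  have e7: "sum f (Y 0) = A 0 1 * pfs m (\<lambda>i j. A (i+2) (j+2))"
  proof -
    define P' where "P' = {\<sigma>. \<sigma> permutes {0..<2*m}}"
    have b: "bij_betw (ext2 m) P' (Y 0)"
    proof (rule bij_betw_byWitness[where f' = "res2 m"])
      show "\<forall>a\<in>P'. res2 m (ext2 m a) = a"
      proof
        fix \<sigma> assume "\<sigma> \<in> P'"
        then have s: "\<sigma> permutes {0..<2*m}" by (simp add: P'_def)
        show "res2 m (ext2 m \<sigma>) = \<sigma>"
        proof
          fix x show "res2 m (ext2 m \<sigma>) x = \<sigma> x"
            using permutes_not_in[OF s, of x] by (auto simp: res2_def ext2_def)
        qed
      qed
      show "\<forall>a\<in>Y 0. ext2 m (res2 m a) = a"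
      proof
        fix \<pi> assume "\<pi> \<in> Y 0"
        then have p: "\<pi> permutes {0..<2*n}" "\<pi> 0 = 0" "\<pi> 1 = 1" unfolding Y_def P_def by auto
        have p2: "\<pi> permutes {2..<2*m+2}"
          by (rule permutes_superset[OF p(1)]) (use p in \<open>auto simp: n_def not_le less_2_cases_iff\<close>)
        show "ext2 m (res2 m \<pi>) = \<pi>"
        proof
          fix x
          show "ext2 m (res2 m \<pi>) x = \<pi> x"
          proof (cases "x \<in> {2..<2*m+2}")
            case True
            then have "\<pi> x \<in> {2..<2*m+2}" using permutes_in_image[OF p2] by blast
            moreover obtain z where "x = z + 2" using True by (intro that[of "x-2"]) auto
            ultimately show ?thesis using True by (auto simp: res2_def ext2_def)
          next
            case False
            then show ?thesis using permutes_not_in[OF p2 False] using False by (auto simp: ext2_def)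
          qed
        qed
      qed
      show "ext2 m ` P' \<subseteq> Y 0"
      proof
        fix \<pi> assume "\<pi> \<in> ext2 m ` P'"
        then obtain \<sigma> where s: "\<sigma> permutes {0..<2*m}" and pe: "\<pi> = ext2 m \<sigma>" unfolding P'_def by auto
        have "\<pi> permutes {2..<2*m+2}" unfolding pe ext2_map[OF s]
          by (rule map_permutation_permutes[OF bij_plus2 s])
        then have "\<pi> permutes {0..<2*n}" by (rule permutes_subset) (auto simp: n_def)
        then show "\<pi> \<in> Y 0" unfolding Y_def P_def pe by (simp add: ext2_def)
      qed
      show "res2 m ` Y 0 \<subseteq> P'"
      proof
        fix \<sigma> assume "\<sigma> \<in> res2 m ` Y 0"
        then obtain \<pi> where y: "\<pi> \<in> Y 0" and se: "\<sigma> = res2 m \<pi>" by auto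
        then have p: "\<pi> permutes {0..<2*n}" "\<pi> 0 = 0" "\<pi> 1 = 1" unfolding Y_def P_def by auto
        have p2: "\<pi> permutes {2..<2*m+2}"
          by (rule permutes_superset[OF p(1)]) (use p in \<open>auto simp: n_def not_le less_2_cases_iff\<close>)
        show "\<sigma> \<in> P'" unfolding P'_def se res2_map[OF p2] using map_permutation_permutes[OF bij_minus2 p2] by simp
      qed
    qed
    have "sum f (Y 0) = (\<Sum>\<sigma>\<in>P'. f (ext2 m \<sigma>))" by (rule sum.reindex_bij_betw[OF b, symmetric])
    also have "\<dots> = (\<Sum>\<sigma>\<in>P'. A 0 1 * (of_int (sign \<sigma>) * (\<Prod>i<m. A (\<sigma> (2*i) + 2) (\<sigma> (2*i+1) + 2))))"
    proof (rule sum.cong[OF refl])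
      fix \<sigma> assume "\<sigma> \<in> P'"
      then have s: "\<sigma> permutes {0..<2*m}" by (simp add: P'_def)
      have sg: "sign (ext2 m \<sigma>) = sign \<sigma>" unfolding ext2_map[OF s]
        by (rule sign_map_permutation[OF _ s]) (auto simp: inj_on_def)
      have "(\<Prod>i<n. A (ext2 m \<sigma> (2 * i)) (ext2 m \<sigma> (2 * i + 1)))
         = A (ext2 m \<sigma> 0) (ext2 m \<sigma> 1) * (\<Prod>i<m. A (ext2 m \<sigma> (2 * Suc i)) (ext2 m \<sigma> (2 * Suc i + 1)))"
        unfolding n_def by (subst prod.lessThan_Suc_shift) simp
      also have "\<dots> = A 0 1 * (\<Prod>i<m. A (\<sigma> (2*i) + 2) (\<sigma> (2*i+1) + 2))"
        by (auto simp: ext2_def intro!: prod.cong)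
      finally show "f (ext2 m \<sigma>) = A 0 1 * (of_int (sign \<sigma>) * (\<Prod>i<m. A (\<sigma> (2*i) + 2) (\<sigma> (2*i+1) + 2)))"
        unfolding f_def sg by simp
    qed
    also have "\<dots> = A 0 1 * pfs m (\<lambda>i j. A (i+2) (j+2))"
      by (simp add: pfs_def P'_def sum_distrib_left)
    finally show ?thesis .
  qed
  have "sum f P = 2 * real n * (A 0 1 * pfs m (\<lambda>i j. A (i+2) (j+2)))"
  proof -
    have "(\<Sum>i<n. sum f (Y i)) = (\<Sum>i<n. A 0 1 * pfs m (\<lambda>i j. A (i+2) (j+2)))"
      using e6 e7 by simp
    moreover have "(\<Sum>i<n. sum f (Z i)) = (\<Sum>i<n. A 0 1 * pfs m (\<lambda>i j. A (i+2) (j+2)))"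
      using e5 e6 e7 by simp
    ultimately show ?thesis using e0 e1 e2 e3 e4 by simp
  qed
  then show ?thesis unfolding n_def P_def f_def pfs_def by simp
qed

lemma pf_red0:
  fixes A :: "nat \<Rightarrow> nat \<Rightarrow> real"
  assumes rows: "\<And>a. 2 \<le> a \<Longrightarrow> a < 2 * Suc m \<Longrightarrow> A 0 a = A 1 a \<and> A a 0 = A a 1"
    and anti: "A 1 0 = - A 0 1"
  shows "pfaffian (Suc m) A = A 0 1 * pfaffian m (\<lambda>i j. A (i+2) (j+2))"
proof -
  have h: "pfs (Suc m) A = 2 * real (Suc m) * (A 0 1 * pfs m (\<lambda>i j. A (i+2) (j+2)))"
    by (rule pfs_red0[OF assms])
  have f: "(fact (Suc m) :: real) = real (Suc m) * fact m" by simp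
  have "pfaffian (Suc m) A = (2*real (Suc m)) * (A 0 1 * pfs m (\<lambda>i j. A (i+2) (j+2))) / ((2*real (Suc m)) * (2^m * fact m))"
    unfolding pfaffian_pfs h f power_Suc by (simp only: mult_ac)
  also have "\<dots> = (A 0 1 * pfs m (\<lambda>i j. A (i+2) (j+2))) / (2^m * fact m)"
    by (rule mult_divide_mult_cancel_left) simp
  finally show ?thesis by (simp add: pfaffian_pfs)
qed

lemma pfaffian_0: "pfaffian 0 A = 1"
proof -
  have "{\<pi>. \<pi> permutes ({}::nat set)} = {id}" by (auto simp: permutes_empty)
  then show ?thesis by (simp add: pfaffian_def)
qed

definition rk :: "nat \<Rightarrow> nat \<Rightarrow> nat" where "rk k i = (if i < k then i else i + 2)"

lemma pf_red:
  fixes A :: "nat \<Rightarrow> nat \<Rightarrow> real"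
  assumes "k + 1 < 2 * Suc m"
    and rows: "\<And>a. a < 2 * Suc m \<Longrightarrow> a \<noteq> k \<Longrightarrow> a \<noteq> k + 1 \<Longrightarrow> A k a = A (k+1) a \<and> A a k = A a (k+1)"
    and anti: "A (k+1) k = - A k (k+1)"
  shows "pfaffian (Suc m) A = A k (k+1) * pfaffian m (\<lambda>i j. A (rk k i) (rk k j))"
  using assms
proof (induction k arbitrary: A)
  case 0
  have "pfaffian (Suc m) A = A 0 1 * pfaffian m (\<lambda>i j. A (i+2) (j+2))"
    by (rule pf_red0) (use 0 in auto)
  then show ?case by (simp add: rk_def)
next
  case (Suc k)
  define \<rho> where "\<rho> = tr k (k+1) \<circ> tr (k+1) (k+2)"
  have rv: "\<rho> k = k+1" "\<rho> (k+1) = k+2" "\<rho> (k+2) = k" "\<And>a. a \<noteq> k \<Longrightarrow> a \<noteq> k+1 \<Longrightarrow> a \<noteq> k+2 \<Longrightarrow> \<rho> a = a"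
    unfolding \<rho>_def by (auto simp: Transposition.transpose_def)
  have rp: "\<rho> permutes {0..<2 * Suc m}" unfolding \<rho>_def using Suc.prems(1)
    by (intro permutes_compose permutes_swap_id) auto
  have sr: "sign \<rho> = 1" unfolding \<rho>_def
    by (simp add: sign_compose permutation_swap_id sign_swap_id)
  define B where "B i j = A (\<rho> i) (\<rho> j)" for i j
  have pB: "pfaffian (Suc m) B = pfaffian (Suc m) A"
    unfolding pfaffian_pfs B_def pfs_perm[OF rp] sr by simp
  have "pfaffian (Suc m) B = B k (k+1) * pfaffian m (\<lambda>i j. B (rk k i) (rk k j))"
  proof (rule Suc.IH)
    show "k + 1 < 2 * Suc m" using Suc.prems(1) by simp
    show "B (k+1) k = - B k (k+1)" unfolding B_def rv using Suc.prems(3) by simp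
    fix a assume a: "a < 2 * Suc m" "a \<noteq> k" "a \<noteq> k + 1"
    show "B k a = B (k+1) a \<and> B a k = B a (k+1)"
    proof (cases "a = k+2")
      case True
      have "k < 2 * Suc m" using Suc.prems(1) by simp
      then show ?thesis unfolding B_def using True rv Suc.prems(2)[of k] by simp
    next
      case False
      then show ?thesis unfolding B_def rv(1,2) rv(4)[OF a(2,3) False] using Suc.prems(2)[of a] a by simp
    qed
  qed
  moreover have "(\<lambda>i j. B (rk k i) (rk k j)) = (\<lambda>i j. A (rk (Suc k) i) (rk (Suc k) j))"
  proof -
    have "\<rho> (rk k i) = rk (Suc k) i" for i
      using rv by (cases "i < k"; cases "i = k") (auto simp: rk_def)
    then show ?thesis unfolding B_def by simp
  qed
  ultimately show ?case using pB unfolding B_def rv by simp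
qed

lemma prod_diff_single:
  fixes f g :: "nat \<Rightarrow> real"
  assumes "finite J" "\<And>j j'. j \<in> J \<Longrightarrow> j' \<in> J \<Longrightarrow> f j \<noteq> g j \<Longrightarrow> f j' \<noteq> g j' \<Longrightarrow> j = j'"
  shows "(\<Sum>j\<in>J. (g j - f j) * (\<Prod>i\<in>J-{j}. f i)) = prod g J - prod f J"
proof (cases "\<exists>j0\<in>J. f j0 \<noteq> g j0")
  case False
  then have "prod g J = prod f J" by (intro prod.cong) auto
  with False show ?thesis by simp
next
  case True
  then obtain j0 where j0: "j0 \<in> J" "f j0 \<noteq> g j0" by blast
  have oth: "j \<in> J \<Longrightarrow> j \<noteq> j0 \<Longrightarrow> f j = g j" for j using assms(2) j0 by blast
  have "(\<Sum>j\<in>J. (g j - f j) * (\<Prod>i\<in>J-{j}. f i)) = (g j0 - f j0) * (\<Prod>i\<in>J-{j0}. f i)"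
    by (rule sum.remove[OF assms(1) j0(1), THEN trans]) (simp add: oth)
  also have "(\<Prod>i\<in>J-{j0}. f i) = (\<Prod>i\<in>J-{j0}. g i)" by (rule prod.cong) (auto simp: oth)
  also have "(g j0 - f j0) * \<dots> = g j0 * (\<Prod>i\<in>J-{j0}. g i) - f j0 * (\<Prod>i\<in>J-{j0}. g i)"
    by (simp add: algebra_simps)
  also have "g j0 * (\<Prod>i\<in>J-{j0}. g i) = prod g J" by (rule prod.remove[OF assms(1) j0(1), symmetric])
  also have "(\<Prod>i\<in>J-{j0}. g i) = (\<Prod>i\<in>J-{j0}. f i)" by (rule prod.cong) (auto simp: oth)
  also have "f j0 * (\<Prod>i\<in>J-{j0}. f i) = prod f J" by (rule prod.remove[OF assms(1) j0(1), symmetric])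
  finally show ?thesis .
qed

lemma perm_pair_unique:
  assumes "\<pi> permutes {0..<2*(n::nat)}" "j < n" "j' < n"
    "k = \<pi> (2*j) \<or> k = \<pi> (2*j+1)" "k = \<pi> (2*j') \<or> k = \<pi> (2*j'+1)"
  shows "j = j'"
proof -
  have inj: "inj \<pi>" using assms(1) permutes_inj by blast
  obtain u where u: "u = 2*j \<or> u = 2*j+1" "\<pi> u = k" using assms(4) by blast
  obtain u' where u': "u' = 2*j' \<or> u' = 2*j'+1" "\<pi> u' = k" using assms(5) by blast
  have "u = u'" using u(2) u'(2) inj by (metis injD)
  then show ?thesis using u(1) u'(1) by presburger
qed

lemma perm_pair_exists:
  assumes "\<pi> permutes {0..<2*(n::nat)}" "k < 2*n"
  shows "\<exists>j<n. k = \<pi> (2*j) \<or> k = \<pi> (2*j+1)"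
proof -
  have "k \<in> \<pi> ` {0..<2*n}" using permutes_image[OF assms(1)] assms(2) by simp
  then obtain m where m: "m < 2*n" "\<pi> m = k" by auto
  have "m = 2*(m div 2) \<or> m = 2*(m div 2)+1" by presburger
  moreover have "m div 2 < n" using m by auto
  ultimately show ?thesis using m by metis
qed

lemma pfaffian_alt:
  "pfaffian n A = (1 / (2 ^ n * fact n)) * (\<Sum>\<pi>\<in>{\<pi>. \<pi> permutes {0..<2 * n}}. of_int (sign \<pi>) * (\<Prod>i<n. A (\<pi> (2 * i)) (\<pi> (2 * i + 1))))"
  by (simp add: pfaffian_def)

lemma pf_scale:
  fixes A B :: "nat \<Rightarrow> nat \<Rightarrow> real"
  assumes "k < 2*n"
    and sc: "\<And>a. a < 2*n \<Longrightarrow> B k a = c * A k a" "\<And>a. a < 2*n \<Longrightarrow> B a k = c * A a k"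
    and oth: "\<And>a b. a < 2*n \<Longrightarrow> b < 2*n \<Longrightarrow> a \<noteq> k \<Longrightarrow> b \<noteq> k \<Longrightarrow> B a b = A a b"
  shows "pfaffian n B = c * pfaffian n A"
proof -
  have "(\<Prod>i<n. B (\<pi> (2 * i)) (\<pi> (2 * i + 1))) = c * (\<Prod>i<n. A (\<pi> (2 * i)) (\<pi> (2 * i + 1)))"
    if p: "\<pi> permutes {0..<2*n}" for \<pi>
  proof -
    obtain j0 where j0: "j0 < n" "k = \<pi> (2*j0) \<or> k = \<pi> (2*j0+1)" using perm_pair_exists[OF p assms(1)] by blast
    have o: "B (\<pi> (2 * i)) (\<pi> (2 * i + 1)) = A (\<pi> (2 * i)) (\<pi> (2 * i + 1))" if "i < n" "i \<noteq> j0" for i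
    proof -
      have lt: "\<pi> (2*i) < 2*n" "\<pi> (2*i+1) < 2*n" using permutes_perm_less[OF p] that(1) by auto
      have ne: "\<pi> (2*i) \<noteq> k" "\<pi> (2*i+1) \<noteq> k"
        using perm_pair_unique[OF p that(1) j0(1), of k] j0(2) that(2) by auto
      show ?thesis by (rule oth[OF lt ne])
    qed
    have "(\<Prod>i<n. B (\<pi> (2 * i)) (\<pi> (2 * i + 1))) = B (\<pi> (2 * j0)) (\<pi> (2 * j0 + 1)) * (\<Prod>i\<in>{..<n}-{j0}. B (\<pi> (2 * i)) (\<pi> (2 * i + 1)))"
      using j0 by (simp add: prod.remove)
    also have "(\<Prod>i\<in>{..<n}-{j0}. B (\<pi> (2 * i)) (\<pi> (2 * i + 1))) = (\<Prod>i\<in>{..<n}-{j0}. A (\<pi> (2 * i)) (\<pi> (2 * i + 1)))"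
      by (rule prod.cong[OF refl], rule o) auto
    also have "B (\<pi> (2 * j0)) (\<pi> (2 * j0 + 1)) = c * A (\<pi> (2 * j0)) (\<pi> (2 * j0 + 1))"
      using j0(2) sc permutes_perm_less[OF p] j0(1) by auto
    finally show ?thesis using j0 by (simp add: prod.remove mult.assoc)
  qed
  then have "(\<Sum>\<pi>\<in>{\<pi>. \<pi> permutes {0..<2 * n}}. of_int (sign \<pi>) * (\<Prod>i<n. B (\<pi> (2 * i)) (\<pi> (2 * i + 1))))
     = (\<Sum>\<pi>\<in>{\<pi>. \<pi> permutes {0..<2 * n}}. c * (of_int (sign \<pi>) * (\<Prod>i<n. A (\<pi> (2 * i)) (\<pi> (2 * i + 1)))))"
    by (intro sum.cong refl) (simp add: mult_ac)
  then show ?thesis unfolding pfaffian_alt by (simp add: sum_distrib_left[symmetric] mult_ac)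
qed

lemma pf_bound:
  assumes "\<And>a b. \<bar>A a b\<bar> \<le> 1"
  shows "\<bar>pfaffian n A\<bar> \<le> fact (2*n)"
proof -
  let ?P = "{\<pi>. \<pi> permutes {0..<2 * n}}"
  have c1: "(1::real) \<le> 2 ^ n * fact n"
    using mult_mono[OF one_le_power[of "2::real" n] fact_ge_1[of n]] by simp
  have c: "\<bar>1 / (2 ^ n * fact n) :: real\<bar> \<le> 1" using c1 by (simp add: field_simps)
  have "\<bar>(\<Sum>\<pi>\<in>?P. of_int (sign \<pi>) * (\<Prod>i<n. A (\<pi> (2 * i)) (\<pi> (2 * i + 1))))\<bar> \<le> (\<Sum>\<pi>\<in>?P. 1)"
  proof (rule order.trans[OF sum_abs sum_mono])
    fix \<pi> show "\<bar>of_int (sign \<pi>) * (\<Prod>i<n. A (\<pi> (2 * i)) (\<pi> (2 * i + 1)))\<bar> \<le> (1::real)"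
    proof -
      have "\<bar>real_of_int (sign \<pi>)\<bar> = 1" by (metis abs_sign of_int_1 of_int_abs)
      moreover have "(\<Prod>x<n. \<bar>A (\<pi> (2 * x)) (\<pi> (2 * x + 1))\<bar>) \<le> 1"
        by (rule prod_le_1) (simp add: assms)
      ultimately show ?thesis by (simp add: abs_mult abs_prod)
    qed
  qed
  also have "(\<Sum>\<pi>\<in>?P. 1) = fact (2*n)" by (simp add: card_permutations)
  finally have s: "\<bar>(\<Sum>\<pi>\<in>?P. of_int (sign \<pi>) * (\<Prod>i<n. A (\<pi> (2 * i)) (\<pi> (2 * i + 1))))\<bar> \<le> fact (2*n)" .
  show ?thesis unfolding pfaffian_alt abs_mult
    by (rule order.trans[OF mult_mono[OF c s]]) auto
qed

lemma perm_term_deriv: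
  fixes M :: "nat \<Rightarrow> nat \<Rightarrow> real" and Mp Mm :: "nat \<Rightarrow> nat \<Rightarrow> nat \<Rightarrow> real"
  assumes p: "\<pi> permutes {0..<2*n}"
    and unp: "\<And>k a b. a \<noteq> k \<Longrightarrow> b \<noteq> k \<Longrightarrow> Mp k a b = M a b"
    and unm: "\<And>k a b. a \<noteq> k \<Longrightarrow> b \<noteq> k \<Longrightarrow> Mm k a b = M a b"
  shows "(\<Sum>j<n. (\<Sum>k<2*n. \<alpha> k * (Mp k (\<pi> (2*j)) (\<pi> (2*j+1)) - M (\<pi> (2*j)) (\<pi> (2*j+1)))
                          + \<beta> k * (Mm k (\<pi> (2*j)) (\<pi> (2*j+1)) - M (\<pi> (2*j)) (\<pi> (2*j+1))))
              * (\<Prod>i\<in>{..<n}-{j}. M (\<pi> (2*i)) (\<pi> (2*i+1))))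
       = (\<Sum>k<2*n. \<alpha> k * ((\<Prod>j<n. Mp k (\<pi> (2*j)) (\<pi> (2*j+1))) - (\<Prod>j<n. M (\<pi> (2*j)) (\<pi> (2*j+1))))
                  + \<beta> k * ((\<Prod>j<n. Mm k (\<pi> (2*j)) (\<pi> (2*j+1))) - (\<Prod>j<n. M (\<pi> (2*j)) (\<pi> (2*j+1)))))"
proof -
  define F where "F j = M (\<pi> (2*j)) (\<pi> (2*j+1))" for j
  define Gp where "Gp k j = Mp k (\<pi> (2*j)) (\<pi> (2*j+1))" for k j
  define Gm where "Gm k j = Mm k (\<pi> (2*j)) (\<pi> (2*j+1))" for k j
  define R where "R j = (\<Prod>i\<in>{..<n}-{j}. F i)" for j
  have key: "(\<Sum>j<n. (G k j - F j) * R j) = prod (G k) {..<n} - prod F {..<n}"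
    if un: "\<And>j. \<pi> (2*j) \<noteq> k \<Longrightarrow> \<pi> (2*j+1) \<noteq> k \<Longrightarrow> G k j = F j" for G k
    unfolding R_def
  proof (rule prod_diff_single)
    fix j j' assume j: "j \<in> {..<n}" "j' \<in> {..<n}" "F j \<noteq> G k j" "F j' \<noteq> G k j'"
    have "k = \<pi> (2*j) \<or> k = \<pi> (2*j+1)" using un[of j] j(3) by auto
    moreover have "k = \<pi> (2*j') \<or> k = \<pi> (2*j'+1)" using un[of j'] j(4) by auto
    ultimately show "j = j'" using perm_pair_unique[OF p] j(1,2) by blast
  qed simp
  have kp: "(\<Sum>j<n. (Gp k j - F j) * R j) = prod (Gp k) {..<n} - prod F {..<n}" for k
    by (rule key) (auto simp: Gp_def F_def unp)
  have km: "(\<Sum>j<n. (Gm k j - F j) * R j) = prod (Gm k) {..<n} - prod F {..<n}" for k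
    by (rule key) (auto simp: Gm_def F_def unm)
  have "(\<Sum>j<n. (\<Sum>k<2*n. \<alpha> k * (Gp k j - F j) + \<beta> k * (Gm k j - F j)) * R j)
      = (\<Sum>j<n. \<Sum>k<2*n. \<alpha> k * ((Gp k j - F j) * R j) + \<beta> k * ((Gm k j - F j) * R j))"
    by (intro sum.cong refl) (simp add: sum_distrib_right sum_distrib_left algebra_simps)
  also have "\<dots> = (\<Sum>k<2*n. \<Sum>j<n. \<alpha> k * ((Gp k j - F j) * R j) + \<beta> k * ((Gm k j - F j) * R j))"
    by (rule sum.swap)
  also have "\<dots> = (\<Sum>k<2*n. \<alpha> k * (\<Sum>j<n. (Gp k j - F j) * R j) + \<beta> k * (\<Sum>j<n. (Gm k j - F j) * R j))"
    by (simp add: sum.distrib sum_distrib_left)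
  also have "\<dots> = (\<Sum>k<2*n. \<alpha> k * (prod (Gp k) {..<n} - prod F {..<n}) + \<beta> k * (prod (Gm k) {..<n} - prod F {..<n}))"
    by (simp add: kp km)
  finally show ?thesis unfolding F_def Gp_def Gm_def R_def .
qed

lemma pf_deriv:
  fixes M :: "real \<Rightarrow> nat \<Rightarrow> nat \<Rightarrow> real" and Mp Mm :: "nat \<Rightarrow> nat \<Rightarrow> nat \<Rightarrow> real"
  assumes der: "\<And>a b. a < 2*n \<Longrightarrow> b < 2*n \<Longrightarrow> a \<noteq> b \<Longrightarrow>
      ((\<lambda>t. M t a b) has_real_derivative
         (\<Sum>k<2*n. \<alpha> k * (Mp k a b - M tt a b) + \<beta> k * (Mm k a b - M tt a b))) (at tt)"
    and unp: "\<And>k a b. a \<noteq> k \<Longrightarrow> b \<noteq> k \<Longrightarrow> Mp k a b = M tt a b"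
    and unm: "\<And>k a b. a \<noteq> k \<Longrightarrow> b \<noteq> k \<Longrightarrow> Mm k a b = M tt a b"
  shows "((\<lambda>t. pfaffian n (M t)) has_real_derivative
      (\<Sum>k<2*n. \<alpha> k * (pfaffian n (Mp k) - pfaffian n (M tt)) + \<beta> k * (pfaffian n (Mm k) - pfaffian n (M tt)))) (at tt)"
proof -
  let ?P = "{\<pi>. \<pi> permutes {0..<2 * n}}"
  let ?c = "1 / (2 ^ n * fact n) :: real"
  define D where "D (\<pi>::nat\<Rightarrow>nat) j = (\<Sum>k<2*n. \<alpha> k * (Mp k (\<pi> (2*j)) (\<pi> (2*j+1)) - M tt (\<pi> (2*j)) (\<pi> (2*j+1)))
                          + \<beta> k * (Mm k (\<pi> (2*j)) (\<pi> (2*j+1)) - M tt (\<pi> (2*j)) (\<pi> (2*j+1))))" for \<pi> j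
  have dp: "((\<lambda>t. \<Prod>j<n. M t (\<pi> (2*j)) (\<pi> (2*j+1))) has_real_derivative
        (\<Sum>j<n. D \<pi> j * (\<Prod>i\<in>{..<n}-{j}. M tt (\<pi> (2*i)) (\<pi> (2*i+1))))) (at tt)" if p: "\<pi> \<in> ?P" for \<pi>
  proof (rule has_field_derivative_prod)
    fix j assume "j \<in> {..<n}"
    then have j: "j < n" by simp
    have inj: "inj \<pi>" using p permutes_inj by blast
    show "((\<lambda>t. M t (\<pi> (2*j)) (\<pi> (2*j+1))) has_real_derivative D \<pi> j) (at tt)"
      unfolding D_def
    proof (rule der)
      show "\<pi> (2*j) < 2*n" "\<pi> (2*j+1) < 2*n" using permutes_perm_less p j by auto
      show "\<pi> (2*j) \<noteq> \<pi> (2*j+1)" using inj by (simp add: inj_eq)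
    qed
  qed
  have d: "((\<lambda>t. pfaffian n (M t)) has_real_derivative
      ?c * (\<Sum>\<pi>\<in>?P. of_int (sign \<pi>) * (\<Sum>j<n. D \<pi> j * (\<Prod>i\<in>{..<n}-{j}. M tt (\<pi> (2*i)) (\<pi> (2*i+1)))))) (at tt)"
    unfolding pfaffian_alt
    by (intro DERIV_cmult DERIV_sum dp) simp
  have "?c * (\<Sum>\<pi>\<in>?P. of_int (sign \<pi>) * (\<Sum>j<n. D \<pi> j * (\<Prod>i\<in>{..<n}-{j}. M tt (\<pi> (2*i)) (\<pi> (2*i+1)))))
      = ?c * (\<Sum>\<pi>\<in>?P. of_int (sign \<pi>) * (\<Sum>k<2*n. \<alpha> k * ((\<Prod>j<n. Mp k (\<pi> (2*j)) (\<pi> (2*j+1))) - (\<Prod>j<n. M tt (\<pi> (2*j)) (\<pi> (2*j+1))))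
                  + \<beta> k * ((\<Prod>j<n. Mm k (\<pi> (2*j)) (\<pi> (2*j+1))) - (\<Prod>j<n. M tt (\<pi> (2*j)) (\<pi> (2*j+1))))))"
  proof -
    have "(\<Sum>j<n. D \<pi> j * (\<Prod>i\<in>{..<n}-{j}. M tt (\<pi> (2*i)) (\<pi> (2*i+1))))
      = (\<Sum>k<2*n. \<alpha> k * ((\<Prod>j<n. Mp k (\<pi> (2*j)) (\<pi> (2*j+1))) - (\<Prod>j<n. M tt (\<pi> (2*j)) (\<pi> (2*j+1))))
                  + \<beta> k * ((\<Prod>j<n. Mm k (\<pi> (2*j)) (\<pi> (2*j+1))) - (\<Prod>j<n. M tt (\<pi> (2*j)) (\<pi> (2*j+1)))))"
      if "\<pi> \<in> ?P" for \<pi>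
      unfolding D_def
      by (rule perm_term_deriv[where M="M tt" and Mp=Mp and Mm=Mm and \<alpha>=\<alpha> and \<beta>=\<beta>, OF _ unp unm]) (use that in simp_all)
    then show ?thesis by simp
  qed
  also have "\<dots> = (\<Sum>k<2*n. \<alpha> k * (pfaffian n (Mp k) - pfaffian n (M tt)) + \<beta> k * (pfaffian n (Mm k) - pfaffian n (M tt)))"
    unfolding pfaffian_alt
    apply (simp add: sum_distrib_left sum_subtractf[symmetric] sum.distrib[symmetric] algebra_simps)
    by (rule sum.swap)
  finally show ?thesis using d by simp
qed

lemma open_coord: "open ((\<lambda>\<xi>::config. \<xi> x) -` B)"
proof -
  have c: "continuous_on UNIV (\<lambda>\<xi>::config. \<xi> x)" using continuous_on_product_coordinates[of x] by assumption
  obtain A where "open A" "A \<inter> UNIV = (\<lambda>\<xi>::config. \<xi> x) -` B \<inter> UNIV"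
    using c[unfolded continuous_on_open_invariant, rule_format, OF open_discrete[of B]] by blast
  then show ?thesis by simp
qed

lemma local_cont:
  fixes F :: "config \<Rightarrow> real"
  assumes "finite A" "\<And>\<eta> \<xi>. (\<forall>x\<in>A. \<eta> x = \<xi> x) \<Longrightarrow> F \<eta> = F \<xi>"
  shows "continuous_on UNIV F"
  unfolding continuous_on_topological
proof (intro ballI allI impI)
  fix \<eta> :: config and B assume B: "open B" "F \<eta> \<in> B"
  define U where "U = (\<Inter>x\<in>A. (\<lambda>\<xi>::config. \<xi> x) -` {\<eta> x})"
  have oU: "open U" unfolding U_def using assms(1) open_coord by (intro open_INT) auto
  show "\<exists>A. open A \<and> \<eta> \<in> A \<and> (\<forall>y\<in>UNIV. y \<in> A \<longrightarrow> F y \<in> B)"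
  proof (rule exI[where x=U], intro conjI ballI impI)
    show "open U" by (rule oU)
    show "\<eta> \<in> U" by (simp add: U_def)
    fix y assume "y \<in> U"
    then have "\<forall>x\<in>A. y x = \<eta> x" by (simp add: U_def)
    then have "F y = F \<eta>" by (rule assms(2))
    then show "F y \<in> B" using B by simp
  qed
qed

lemma local_fun_cont: "local_fun F \<Longrightarrow> continuous_on UNIV F"
  unfolding local_fun_def using local_cont by blast

locale msg =
  fixes \<theta> :: real and p q :: "int \<Rightarrow> real" and S :: "real \<Rightarrow> (config \<Rightarrow> real) \<Rightarrow> config \<Rightarrow> real"
  assumes msg: "markov_semigroup_gen \<theta> p q S"
begin

lemmas m = msg[unfolded markov_semigroup_gen_def]
lemmas m1 = conjunct1[OF m]
lemmas m2 = conjunct1[OF conjunct2[OF m]]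
lemmas m3 = conjunct1[OF conjunct2[OF conjunct2[OF m]]]
lemmas m4 = conjunct1[OF conjunct2[OF conjunct2[OF conjunct2[OF m]]]]
lemmas m5 = conjunct1[OF conjunct2[OF conjunct2[OF conjunct2[OF conjunct2[OF m]]]]]
lemmas m6 = conjunct1[OF conjunct2[OF conjunct2[OF conjunct2[OF conjunct2[OF conjunct2[OF m]]]]]]
lemmas m7 = conjunct1[OF conjunct2[OF conjunct2[OF conjunct2[OF conjunct2[OF conjunct2[OF conjunct2[OF m]]]]]]]
lemmas m8 = conjunct2[OF conjunct2[OF conjunct2[OF conjunct2[OF conjunct2[OF conjunct2[OF conjunct2[OF m]]]]]]]

lemma S_cont: "0 \<le> t \<Longrightarrow> continuous_on UNIV F \<Longrightarrow> continuous_on UNIV (S t F)"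
  using m1 by blast
lemma S_zero: "continuous_on UNIV F \<Longrightarrow> S 0 F = F"
  using m2 by blast
lemma S_semi: "0 \<le> s \<Longrightarrow> 0 \<le> t \<Longrightarrow> continuous_on UNIV F \<Longrightarrow> S (s + t) F = S s (S t F)"
  using m3 by blast
lemma S_lin: "0 \<le> t \<Longrightarrow> continuous_on UNIV F \<Longrightarrow> continuous_on UNIV G \<Longrightarrow>
    S t (\<lambda>\<eta>. a * F \<eta> + b * G \<eta>) \<eta> = a * S t F \<eta> + b * S t G \<eta>"
proof -
  assume "0 \<le> t" "continuous_on UNIV F" "continuous_on UNIV G"
  then have "S t (\<lambda>\<eta>. a * F \<eta> + b * G \<eta>) = (\<lambda>\<eta>. a * S t F \<eta> + b * S t G \<eta>)" using m4 by blast
  then show ?thesis by simp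
qed
lemma S_pos: "0 \<le> t \<Longrightarrow> continuous_on UNIV F \<Longrightarrow> (\<forall>\<eta>. F \<eta> \<ge> 0) \<Longrightarrow> S t F \<eta> \<ge> 0"
  using m5 by blast
lemma S_one: "0 \<le> t \<Longrightarrow> S t (\<lambda>_. 1) = (\<lambda>_. 1)"
  using m6 by blast
lemma S_strong: "continuous_on UNIV F \<Longrightarrow> \<epsilon> > 0 \<Longrightarrow>
    \<exists>\<delta>>0. \<forall>t. 0 < t \<and> t < \<delta> \<longrightarrow> (\<forall>\<eta>. \<bar>S t F \<eta> - F \<eta>\<bar> < \<epsilon>)"
  using m7 by blast
lemma S_gen: "local_fun F \<Longrightarrow> \<epsilon> > 0 \<Longrightarrow> \<exists>\<delta>>0. \<forall>t. 0 < t \<and> t < \<delta> \<longrightarrow>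
            (\<forall>\<eta>. \<bar>(S t F \<eta> - F \<eta>) / t - gen \<theta> p q F \<eta>\<bar> < \<epsilon>)"
  using m8 by blast

lemma S_const: "0 \<le> t \<Longrightarrow> S t (\<lambda>_. c) \<eta> = c"
proof -
  assume t: "0 \<le> t"
  have c1: "continuous_on UNIV (\<lambda>_::config. 1::real)" by simp
  have "S t (\<lambda>\<eta>. c * 1 + 0 * 1) \<eta> = c * S t (\<lambda>_. 1) \<eta> + 0 * S t (\<lambda>_. 1) \<eta>"
    by (rule S_lin[OF t c1 c1])
  then show ?thesis using S_one[OF t] by simp
qed

lemma S_bound:
  assumes t: "0 \<le> t" and G: "continuous_on UNIV G" and b: "\<And>\<xi>. \<bar>G \<xi>\<bar> \<le> c"
  shows "\<bar>S t G \<eta>\<bar> \<le> c"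
proof -
  have c1: "continuous_on UNIV (\<lambda>_::config. 1::real)" by simp
  have b2: "G \<xi> \<le> c" "- G \<xi> \<le> c" for \<xi> using b[of \<xi>] by (auto simp: abs_le_iff)
  have "S t (\<lambda>\<xi>. c * 1 + (-1) * G \<xi>) \<eta> \<ge> 0"
  proof (rule S_pos[OF t])
    show "continuous_on UNIV (\<lambda>\<xi>. c * 1 + (-1) * G \<xi>)" using G by (intro continuous_intros)
    show "\<forall>\<xi>. 0 \<le> c * 1 + (-1) * G \<xi>" using b2 by simp
  qed
  moreover have "S t (\<lambda>\<xi>. c * 1 + (-1) * G \<xi>) \<eta> = c * S t (\<lambda>_. 1) \<eta> + (-1) * S t G \<eta>"
    by (rule S_lin[OF t c1 G])
  moreover have "S t (\<lambda>\<xi>. c * 1 + 1 * G \<xi>) \<eta> \<ge> 0"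
  proof (rule S_pos[OF t])
    show "continuous_on UNIV (\<lambda>\<xi>. c * 1 + 1 * G \<xi>)" using G by (intro continuous_intros)
    show "\<forall>\<xi>. 0 \<le> c * 1 + 1 * G \<xi>"
    proof
      fix \<xi> show "0 \<le> c * 1 + 1 * G \<xi>" using b2(2)[of \<xi>] by linarith
    qed
  qed
  moreover have "S t (\<lambda>\<xi>. c * 1 + 1 * G \<xi>) \<eta> = c * S t (\<lambda>_. 1) \<eta> + 1 * S t G \<eta>"
    by (rule S_lin[OF t c1 G])
  ultimately show ?thesis using S_one[OF t] by (simp add: abs_le_iff)
qed

lemma S_diff:
  assumes t: "0 \<le> t" and F: "continuous_on UNIV F" and G: "continuous_on UNIV G"
  shows "S t (\<lambda>\<xi>. F \<xi> - G \<xi>) \<eta> = S t F \<eta> - S t G \<eta>"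
  using S_lin[OF t F G, of 1 "-1" \<eta>] by simp

lemma S_sum:
  assumes t: "0 \<le> t" and "finite K" and F: "\<And>k. k \<in> K \<Longrightarrow> continuous_on UNIV (F k)"
  shows "S t (\<lambda>\<xi>. \<Sum>k\<in>K. c k * F k \<xi>) \<eta> = (\<Sum>k\<in>K. c k * S t (F k) \<eta>)"
  using assms(2) F
proof (induction K rule: finite_induct)
  case empty
  then show ?case using S_const[OF t, of 0] by simp
next
  case (insert k K)
  have "S t (\<lambda>\<xi>. \<Sum>k\<in>insert k K. c k * F k \<xi>) \<eta> = S t (\<lambda>\<xi>. c k * F k \<xi> + 1 * (\<Sum>k\<in>K. c k * F k \<xi>)) \<eta>"
    using insert by simp
  also have "\<dots> = c k * S t (F k) \<eta> + 1 * S t (\<lambda>\<xi>. \<Sum>k\<in>K. c k * F k \<xi>) \<eta>"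
  proof (rule S_lin[OF t])
    show "continuous_on UNIV (F k)" using insert.prems by simp
    show "continuous_on UNIV (\<lambda>\<xi>. \<Sum>k\<in>K. c k * F k \<xi>)"
      using insert.prems by (intro continuous_intros) auto
  qed
  finally show ?case using insert by simp
qed

lemma S_quot:
  assumes t: "0 \<le> t" and h: "0 < h" and F: "continuous_on UNIV F" and G: "continuous_on UNIV G"
  shows "(S t (S h F) \<eta> - S t F \<eta>) / h - S t G \<eta> = S t (\<lambda>\<xi>. (S h F \<xi> - F \<xi>) / h - G \<xi>) \<eta>"
proof -
  have SF: "continuous_on UNIV (S h F)" using S_cont[OF _ F] h by simp
  have A: "continuous_on UNIV (\<lambda>\<xi>. S h F \<xi> - F \<xi>)" using SF F by (intro continuous_intros)
  have e: "(\<lambda>\<xi>. (S h F \<xi> - F \<xi>) / h - G \<xi>) = (\<lambda>\<xi>. (1/h) * (S h F \<xi> - F \<xi>) + (-1) * G \<xi>)"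
    by (simp add: fun_eq_iff field_simps)
  have "S t (\<lambda>\<xi>. (1/h) * (S h F \<xi> - F \<xi>) + (-1) * G \<xi>) \<eta> = (1/h) * S t (\<lambda>\<xi>. S h F \<xi> - F \<xi>) \<eta> + (-1) * S t G \<eta>"
    by (rule S_lin[OF t A G])
  also have "S t (\<lambda>\<xi>. S h F \<xi> - F \<xi>) \<eta> = S t (S h F) \<eta> - S t F \<eta>" by (rule S_diff[OF t SF F])
  finally show ?thesis unfolding e by (simp add: field_simps)
qed

lemma S_tcont:
  assumes F: "continuous_on UNIV F" and t0: "0 \<le> t0" and e: "\<epsilon> > 0"
  shows "\<exists>\<delta>>0. \<forall>t\<ge>0. \<bar>t - t0\<bar> < \<delta> \<longrightarrow> \<bar>S t F \<eta> - S t0 F \<eta>\<bar> < \<epsilon>"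
proof -
  obtain \<delta> where d: "\<delta> > 0" "\<And>h \<xi>. 0 < h \<Longrightarrow> h < \<delta> \<Longrightarrow> \<bar>S h F \<xi> - F \<xi>\<bar> < \<epsilon>/2"
    using S_strong[OF F, of "\<epsilon>/2"] e by auto
  have main: "\<bar>S (s + h) F \<eta> - S s F \<eta>\<bar> < \<epsilon>" if s: "0 \<le> s" and h: "0 < h" "h < \<delta>" for s h
  proof -
    have SF: "continuous_on UNIV (S h F)" using S_cont[OF _ F] h by simp
    have "S (s + h) F \<eta> - S s F \<eta> = S s (S h F) \<eta> - S s F \<eta>" using S_semi[OF s _ F, of h] h by simp
    also have "\<dots> = S s (\<lambda>\<xi>. S h F \<xi> - F \<xi>) \<eta>" by (rule S_diff[OF s SF F, symmetric])
    finally have eq: "S (s + h) F \<eta> - S s F \<eta> = S s (\<lambda>\<xi>. S h F \<xi> - F \<xi>) \<eta>" .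
    have "\<bar>S s (\<lambda>\<xi>. S h F \<xi> - F \<xi>) \<eta>\<bar> \<le> \<epsilon>/2"
      by (rule S_bound[OF s]) (use SF F d h in \<open>auto intro!: continuous_intros less_imp_le\<close>)
    then show ?thesis using eq e by simp
  qed
  show ?thesis
  proof (rule exI[where x=\<delta>], intro conjI allI impI)
    show "\<delta> > 0" by (rule d(1))
    fix t assume t: "0 \<le> t" "\<bar>t - t0\<bar> < \<delta>"
    consider "t = t0" | "t > t0" | "t < t0" by linarith
    then show "\<bar>S t F \<eta> - S t0 F \<eta>\<bar> < \<epsilon>"
    proof cases
      case 1 then show ?thesis using e by simp
    next
      case 2 then show ?thesis using main[OF t0, of "t - t0"] t by simp
    next
      case 3 then show ?thesis using main[OF t(1), of "t0 - t"] t by (simp add: abs_minus_commute)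
    qed
  qed
qed

lemma S_tcont_on:
  assumes F: "continuous_on UNIV F" and "T \<subseteq> {0..}"
  shows "continuous_on T (\<lambda>t. S t F \<eta>)"
  unfolding continuous_on_iff
proof (intro ballI allI impI)
  fix x e assume x: "x \<in> T" and e: "(0::real) < e"
  obtain d where d: "d > 0" "\<And>t. 0 \<le> t \<Longrightarrow> \<bar>t - x\<bar> < d \<Longrightarrow> \<bar>S t F \<eta> - S x F \<eta>\<bar> < e"
    using S_tcont[OF F _ e, of x \<eta>] x assms(2) by auto
  show "\<exists>d>0. \<forall>x'\<in>T. dist x' x < d \<longrightarrow> dist (S x' F \<eta>) (S x F \<eta>) < e"
    using d assms(2) by (auto simp: dist_real_def)
qed

lemma S_deriv:
  assumes F: "local_fun F" and G: "continuous_on UNIV (gen \<theta> p q F)" and t: "0 < t"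
  shows "((\<lambda>s. S s F \<eta>) has_real_derivative S t (gen \<theta> p q F) \<eta>) (at t)"
proof -
  let ?G = "gen \<theta> p q F"
  have Fc: "continuous_on UNIV F" by (rule local_fun_cont[OF F])
  show ?thesis unfolding has_field_derivative_iff LIM_eq
  proof (intro allI impI)
    fix e :: real assume e: "0 < e"
    obtain d1 where d1: "d1 > 0" "\<And>h \<xi>. 0 < h \<Longrightarrow> h < d1 \<Longrightarrow> \<bar>(S h F \<xi> - F \<xi>) / h - ?G \<xi>\<bar> < e/3"
      using S_gen[OF F, of "e/3"] e by auto
    obtain d2 where d2: "d2 > 0" "\<And>h \<xi>. 0 < h \<Longrightarrow> h < d2 \<Longrightarrow> \<bar>S h ?G \<xi> - ?G \<xi>\<bar> < e/3"
      using S_strong[OF G, of "e/3"] e by auto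
    have bnd: "\<bar>S s (\<lambda>\<xi>. (S h F \<xi> - F \<xi>) / h - ?G \<xi>) \<eta>\<bar> \<le> e/3" if "0 \<le> s" "0 < h" "h < d1" for s h
    proof (rule S_bound[OF that(1)])
      have "continuous_on UNIV (S h F)" using S_cont[OF _ Fc] that by simp
      then show "continuous_on UNIV (\<lambda>\<xi>. (S h F \<xi> - F \<xi>) / h - ?G \<xi>)"
        using Fc G that(2) by (intro continuous_intros) auto
      show "\<bar>(S h F \<xi> - F \<xi>) / h - ?G \<xi>\<bar> \<le> e/3" for \<xi> using d1(2)[OF that(2,3)] by (simp add: less_imp_le)
    qed
    show "\<exists>s>0. \<forall>y. y \<noteq> t \<and> norm (y - t) < s \<longrightarrow> norm ((S y F \<eta> - S t F \<eta>) / (y - t) - S t ?G \<eta>) < e"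
    proof (rule exI[where x="min (min d1 d2) t"], intro conjI allI impI)
      show "0 < min (min d1 d2) t" using d1 d2 t by simp
      fix y assume y: "y \<noteq> t \<and> norm (y - t) < min (min d1 d2) t"
      consider "y > t" | "y < t" using y by linarith
      then show "norm ((S y F \<eta> - S t F \<eta>) / (y - t) - S t ?G \<eta>) < e"
      proof cases
        case 1
        define h where "h = y - t"
        have h: "0 < h" "h < d1" using 1 y by (auto simp: h_def)
        have "S y F = S t (S h F)" using S_semi[OF _ _ Fc, of t h] t h by (simp add: h_def)
        then have "(S y F \<eta> - S t F \<eta>) / (y - t) - S t ?G \<eta> = S t (\<lambda>\<xi>. (S h F \<xi> - F \<xi>) / h - ?G \<xi>) \<eta>"
          using S_quot[OF _ h(1) Fc G, of t \<eta>] t by (simp add: h_def)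
        then show ?thesis using bnd[of t h] t h e by simp
      next
        case 2
        define h where "h = t - y"
        have h: "0 < h" "h < d1" "h < d2" and y0: "0 < y" using 2 y by (auto simp: h_def)
        have Gh: "continuous_on UNIV (S h ?G)" using S_cont[OF _ G] h by simp
        have "S t F = S y (S h F)" using S_semi[OF _ _ Fc, of y h] y0 h by (simp add: h_def)
        moreover have "S t ?G = S y (S h ?G)" using S_semi[OF _ _ G, of y h] y0 h by (simp add: h_def)
        ultimately have "(S y F \<eta> - S t F \<eta>) / (y - t) - S t ?G \<eta>
            = ((S y (S h F) \<eta> - S y F \<eta>) / h - S y ?G \<eta>) + (S y ?G \<eta> - S y (S h ?G) \<eta>)"
          using 2 by (simp add: h_def divide_simps) (simp add: algebra_simps)
        also have "(S y (S h F) \<eta> - S y F \<eta>) / h - S y ?G \<eta> = S y (\<lambda>\<xi>. (S h F \<xi> - F \<xi>) / h - ?G \<xi>) \<eta>"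
          using S_quot[OF _ h(1) Fc G, of y \<eta>] y0 by simp
        also have "S y ?G \<eta> - S y (S h ?G) \<eta> = S y (\<lambda>\<xi>. ?G \<xi> - S h ?G \<xi>) \<eta>"
          using S_diff[OF _ G Gh, of y \<eta>] y0 by simp
        finally have eq: "(S y F \<eta> - S t F \<eta>) / (y - t) - S t ?G \<eta>
            = S y (\<lambda>\<xi>. (S h F \<xi> - F \<xi>) / h - ?G \<xi>) \<eta> + S y (\<lambda>\<xi>. ?G \<xi> - S h ?G \<xi>) \<eta>" .
        have b1: "\<bar>S y (\<lambda>\<xi>. (S h F \<xi> - F \<xi>) / h - ?G \<xi>) \<eta>\<bar> \<le> e/3" using bnd[of y h] y0 h by simp
        have b2: "\<bar>S y (\<lambda>\<xi>. ?G \<xi> - S h ?G \<xi>) \<eta>\<bar> \<le> e/3"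
        proof (rule S_bound)
          show "0 \<le> y" using y0 by simp
          show "continuous_on UNIV (\<lambda>\<xi>. ?G \<xi> - S h ?G \<xi>)" using G Gh by (intro continuous_intros)
          show "\<bar>?G \<xi> - S h ?G \<xi>\<bar> \<le> e/3" for \<xi> using d2(2)[OF h(1,3), of \<xi>] by (simp add: abs_minus_commute)
        qed
        show ?thesis unfolding eq using b1 b2 e by simp
      qed
    qed
  qed
qed

end

definition W :: "int set \<Rightarrow> config \<Rightarrow> nat" where "W U \<xi> = card {x\<in>U. \<xi> x}"

lemma W_remove:
  assumes "finite U"
  shows "W U \<xi> = W (U - {z}) \<xi> + (if z \<in> U \<and> \<xi> z then 1 else 0)"
proof (cases "z \<in> U \<and> \<xi> z")
  case True
  then have "{x\<in>U. \<xi> x} = insert z {x\<in>U - {z}. \<xi> x}" by auto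
  moreover have "finite {x\<in>U - {z}. \<xi> x}" using assms by simp
  ultimately show ?thesis using True unfolding W_def by simp
next
  case False
  then have "{x\<in>U. \<xi> x} = {x\<in>U - {z}. \<xi> x}" by auto
  then show ?thesis using False unfolding W_def by simp
qed

lemma W_cong: "(\<And>x. x \<in> U \<Longrightarrow> \<xi> x = \<zeta> x) \<Longrightarrow> W U \<xi> = W U \<zeta>"
  unfolding W_def by (intro arg_cong[where f=card]) auto

lemma W_split:
  assumes "finite U" "s \<noteq> d"
  shows "W U \<xi> = W (U - {s, d}) \<xi> + (if s \<in> U \<and> \<xi> s then 1 else 0) + (if d \<in> U \<and> \<xi> d then 1 else 0)"
proof -
  have "W U \<xi> = W (U - {s}) \<xi> + (if s \<in> U \<and> \<xi> s then 1 else 0)" by (rule W_remove[OF assms(1)])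
  also have "W (U - {s}) \<xi> = W (U - {s} - {d}) \<xi> + (if d \<in> U - {s} \<and> \<xi> d then 1 else 0)"
    by (rule W_remove) (use assms in simp)
  also have "U - {s} - {d} = U - {s, d}" by auto
  finally show ?thesis using assms(2) by simp
qed

lemma jump_gen:
  fixes \<theta> :: real
  assumes U: "finite U" and sd: "s \<noteq> d"
  defines "F \<equiv> \<lambda>V \<xi>. (- \<theta>) ^ W V \<xi>"
  shows "\<theta> * F U (eta_a \<eta> s d) + (1 - \<theta>) * F U (eta_c \<eta> s d) - F U \<eta> =
     (if (s \<in> U) = (d \<in> U) then 0
      else if s \<in> U then F (U - {s}) \<eta> - F U \<eta> else F (insert s U) \<eta> - F U \<eta>)"
proof -
  define N where "N = W (U - {s, d}) \<eta>"
  have agree: "\<And>\<xi>. (\<And>x. x \<noteq> s \<Longrightarrow> x \<noteq> d \<Longrightarrow> \<xi> x = \<eta> x) \<Longrightarrow> W (U - {s, d}) \<xi> = N"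
    unfolding N_def by (rule W_cong) auto
  have Wx: "W U \<xi> = N + (if s \<in> U \<and> \<xi> s then 1 else 0) + (if d \<in> U \<and> \<xi> d then 1 else 0)"
    if "\<And>x. x \<noteq> s \<Longrightarrow> x \<noteq> d \<Longrightarrow> \<xi> x = \<eta> x" for \<xi>
    using W_split[OF U sd, of \<xi>] agree[OF that] by simp
  have Wa: "W U (eta_a \<eta> s d) = N + (if d \<in> U \<and> (\<eta> s \<noteq> \<eta> d) then 1 else 0)"
    using Wx[of "eta_a \<eta> s d"] sd by (simp add: eta_a_def)
  have Wc: "W U (eta_c \<eta> s d) = N + (if d \<in> U \<and> (\<eta> s \<or> \<eta> d) then 1 else 0)"
    using Wx[of "eta_c \<eta> s d"] sd by (simp add: eta_c_def)
  have W0: "W U \<eta> = N + (if s \<in> U \<and> \<eta> s then 1 else 0) + (if d \<in> U \<and> \<eta> d then 1 else 0)"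
    using Wx[of \<eta>] by simp
  have Wm: "W (U - {s}) \<eta> = N + (if d \<in> U \<and> \<eta> d then 1 else 0)"
  proof -
    have "W (U - {s}) \<eta> = W (U - {s} - {s, d}) \<eta> + (if s \<in> U - {s} \<and> \<eta> s then 1 else 0) + (if d \<in> U - {s} \<and> \<eta> d then 1 else 0)"
      by (rule W_split) (use U sd in auto)
    moreover have "U - {s} - {s, d} = U - {s, d}" by auto
    ultimately show ?thesis using sd by (simp add: N_def)
  qed
  have Wp: "W (insert s U) \<eta> = N + (if \<eta> s then 1 else 0) + (if d \<in> U \<and> \<eta> d then 1 else 0)"
  proof -
    have "W (insert s U) \<eta> = W (insert s U - {s, d}) \<eta> + (if s \<in> insert s U \<and> \<eta> s then 1 else 0) + (if d \<in> insert s U \<and> \<eta> d then 1 else 0)"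
      by (rule W_split) (use U sd in auto)
    moreover have "insert s U - {s, d} = U - {s, d}" by auto
    ultimately show ?thesis using sd by (simp add: N_def)
  qed
  have alg: "\<theta> * (- \<theta>) ^ N + (1 - \<theta>) * (- \<theta>) ^ (N + 1) - (- \<theta>) ^ (N + 2) = 0"
    by (simp add: algebra_simps power_add)
  show ?thesis unfolding F_def Wa Wc W0 Wm Wp
    using alg by (cases "\<eta> s"; cases "\<eta> d"; cases "s \<in> U"; cases "d \<in> U") (simp_all add: algebra_simps power_add)
qed

definition Uy :: "nat \<Rightarrow> (nat \<Rightarrow> int) \<Rightarrow> int set" where
  "Uy m y = (\<Union>i\<in>{..<m}. {y (2*i)..<y (2*i+1)})"

lemma finite_Uy: "finite (Uy m y)" unfolding Uy_def by auto

lemma Sigma_W: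
  assumes mono: "\<And>i j. i \<le> j \<Longrightarrow> j < 2*m \<Longrightarrow> y i \<le> y j"
  shows "Sigma_prod \<theta> m y \<xi> = (- \<theta>) ^ W (Uy m y) \<xi>"
proof -
  define C where "C i = {x. y (2*i) \<le> x \<and> x < y (2*i+1) \<and> \<xi> x}" for i
  have fC: "finite (C i)" for i
    by (rule finite_subset[of _ "{y (2*i)..<y (2*i+1)}"]) (auto simp: C_def)
  have disj: "C i \<inter> C j = {}" if "i < m" "j < m" "i \<noteq> j" for i j
  proof -
    have "C a \<inter> C b = {}" if "a < b" "b < m" for a b
    proof -
      have "y (2*a+1) \<le> y (2*b)" using mono[of "2*a+1" "2*b"] that by simp
      then show ?thesis unfolding C_def by auto
    qed
    then show ?thesis using that by (metis inf_commute linorder_neqE_nat)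
  qed
  have U: "(\<Union>i\<in>{..<m}. C i) = {x\<in>Uy m y. \<xi> x}" unfolding C_def Uy_def by auto
  have "Sigma_prod \<theta> m y \<xi> = (\<Prod>i<m. (- \<theta>) ^ card (C i))"
    unfolding Sigma_prod_def sigma_def count_int_def C_def by simp
  also have "\<dots> = (- \<theta>) ^ (\<Sum>i<m. card (C i))" by (simp add: power_sum)
  also have "(\<Sum>i<m. card (C i)) = card (\<Union>i\<in>{..<m}. C i)"
    by (rule card_UN_disjoint[symmetric]) (use fC disj in auto)
  finally show ?thesis unfolding U W_def .
qed

definition strict_on :: "nat \<Rightarrow> (nat \<Rightarrow> int) \<Rightarrow> bool" where
  "strict_on N y \<longleftrightarrow> (\<forall>i j. i < j \<longrightarrow> j < N \<longrightarrow> y i < y j)"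

lemma strict_less_iff: "strict_on N y \<Longrightarrow> a < N \<Longrightarrow> b < N \<Longrightarrow> y a < y b \<longleftrightarrow> a < b"
  unfolding strict_on_def by (metis linorder_neqE_nat order_less_asym order_less_irrefl)

lemma strict_le_iff: "strict_on N y \<Longrightarrow> a < N \<Longrightarrow> b < N \<Longrightarrow> y a \<le> y b \<longleftrightarrow> a \<le> b"
  using strict_less_iff[of N y b a] by (simp add: not_less[symmetric])

lemma mem_Uy: "x \<in> Uy m y \<longleftrightarrow> (\<exists>j<m. y (2*j) \<le> x \<and> x < y (2*j+1))"
  unfolding Uy_def by auto

lemma Uy_nonbd:
  assumes "x \<notin> y ` {..<2*m}"
  shows "(x \<in> Uy m y) = (x - 1 \<in> Uy m y)"
proof
  assume "x \<in> Uy m y"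
  then obtain j where j: "j < m" "y (2*j) \<le> x" "x < y (2*j+1)" by (auto simp: mem_Uy)
  have "x \<noteq> y (2*j)" using assms j(1) by auto
  then show "x - 1 \<in> Uy m y" using j by (auto simp: mem_Uy)
next
  assume "x - 1 \<in> Uy m y"
  then obtain j where j: "j < m" "y (2*j) \<le> x - 1" "x - 1 < y (2*j+1)" by (auto simp: mem_Uy)
  have "x \<noteq> y (2*j+1)" using assms j(1) by auto
  then show "x \<in> Uy m y" using j by (auto simp: mem_Uy)
qed

lemma yk_in_I:
  assumes "strict_on (2*m) y" "k < 2*m" "j < m"
  shows "(y (2*j) \<le> y k \<and> y k < y (2*j+1)) \<longleftrightarrow> k = 2*j"
  using strict_le_iff[OF assms(1), of "2*j" k] strict_less_iff[OF assms(1), of k "2*j+1"] assms(2,3) by auto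

lemma yk1_in_I:
  assumes "strict_on (2*m) y" "k < 2*m" "j < m"
  shows "(y (2*j) \<le> y k - 1 \<and> y k - 1 < y (2*j+1)) \<longleftrightarrow> k = 2*j+1"
  using strict_less_iff[OF assms(1), of "2*j" k] strict_le_iff[OF assms(1), of k "2*j+1"] assms(2,3) by auto

lemma Uy_bd:
  assumes "strict_on (2*m) y" "k < 2*m"
  shows "(y k \<in> Uy m y) = even k" "(y k - 1 \<in> Uy m y) = odd k"
proof -
  show "(y k \<in> Uy m y) = even k"
  proof
    assume "y k \<in> Uy m y"
    then obtain j where "j < m" "y (2*j) \<le> y k \<and> y k < y (2*j+1)" by (auto simp: mem_Uy)
    then show "even k" using yk_in_I[OF assms] by auto
  next
    assume "even k"
    then obtain j where j: "k = 2*j" by (auto elim: evenE)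
    then have "j < m" using assms(2) by simp
    then show "y k \<in> Uy m y" using yk_in_I[OF assms \<open>j < m\<close>] j by (auto simp: mem_Uy)
  qed
  show "(y k - 1 \<in> Uy m y) = odd k"
  proof
    assume "y k - 1 \<in> Uy m y"
    then obtain j where "j < m" "y (2*j) \<le> y k - 1 \<and> y k - 1 < y (2*j+1)" by (auto simp: mem_Uy)
    then show "odd k" using yk1_in_I[OF assms] by auto
  next
    assume "odd k"
    then obtain j where j: "k = 2*j+1" by (auto elim: oddE)
    then have "j < m" using assms(2) by simp
    then show "y k - 1 \<in> Uy m y" using yk1_in_I[OF assms \<open>j < m\<close>] j by (auto simp: mem_Uy)
  qed
qed

lemma strict_mono_le: "strict_on N y \<Longrightarrow> a \<le> b \<Longrightarrow> b < N \<Longrightarrow> y a \<le> y b"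
  using strict_le_iff[of N y a b] by simp

lemma par_ne[simp]: "2*(j::nat) \<noteq> Suc (2*i)" "Suc (2*j) \<noteq> 2*(i::nat)"
  by presburger+

lemma memI: "j < m \<Longrightarrow> y (2*j) \<le> x \<Longrightarrow> x < y (2*j+1) \<Longrightarrow> x \<in> Uy m y"
  unfolding mem_Uy by blast

lemma memI': "y (2*j) \<le> x \<Longrightarrow> x < y (2*j+1) \<Longrightarrow> j < m \<Longrightarrow> x \<in> Uy m y"
  unfolding mem_Uy by blast

lemma memE: "x \<in> Uy m y \<Longrightarrow> (\<And>j. j < m \<Longrightarrow> y (2*j) \<le> x \<Longrightarrow> x < y (2*j+1) \<Longrightarrow> P) \<Longrightarrow> P"
  unfolding mem_Uy by blast

lemma Uy_plus:
  assumes st: "strict_on (2*m) y" and k: "k < 2*m"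
  shows "Uy m (y(k := y k + 1)) = (if even k then Uy m y - {y k} else insert (y k) (Uy m y))"
proof (cases "even k")
  case True
  then obtain i where i: "k = 2*i" by (auto elim: evenE)
  have im: "i < m" using k i by simp
  have "x \<in> Uy m (y(k := y k + 1)) \<longleftrightarrow> x \<in> Uy m y - {y k}" for x
  proof
    assume "x \<in> Uy m (y(k := y k + 1))"
    then obtain j where j: "j < m" "(y(k := y k + 1)) (2*j) \<le> x" "x < (y(k := y k + 1)) (2*j+1)"
      by (rule memE)
    show "x \<in> Uy m y - {y k}"
    proof (cases "j = i")
      case True
      then have "y (2*i) \<le> x" "x < y (2*i+1)" "x \<noteq> y k" using j i by auto
      then show ?thesis using im by (blast intro: memI)
    next
      case False
      then have b: "y (2*j) \<le> x" "x < y (2*j+1)" using j i by auto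
      have "x \<noteq> y k" using yk_in_I[OF st k j(1)] b False i by auto
      then show ?thesis using b j(1) by (blast intro: memI)
    qed
  next
    assume "x \<in> Uy m y - {y k}"
    then obtain j where j: "j < m" "y (2*j) \<le> x" "x < y (2*j+1)" and xk: "x \<noteq> y k" by (blast elim: memE)
    have "(y(k := y k + 1)) (2*j) \<le> x" "x < (y(k := y k + 1)) (2*j+1)" using j xk i by auto
    then show "x \<in> Uy m (y(k := y k + 1))" by (rule memI[OF j(1)])
  qed
  then have "Uy m (y(k := y k + 1)) = Uy m y - {y k}" by (intro set_eqI)
  then show ?thesis using True by simp
next
  case False
  then obtain i where i: "k = 2*i+1" by (auto elim: oddE)
  have im: "i < m" using k i by simp
  have mono: "y (2*i) \<le> y k" using strict_mono_le[OF st, of "2*i" k] i k by simp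
  have "x \<in> Uy m (y(k := y k + 1)) \<longleftrightarrow> x \<in> insert (y k) (Uy m y)" for x
  proof
    assume "x \<in> Uy m (y(k := y k + 1))"
    then obtain j where j: "j < m" "(y(k := y k + 1)) (2*j) \<le> x" "x < (y(k := y k + 1)) (2*j+1)"
      by (rule memE)
    show "x \<in> insert (y k) (Uy m y)"
    proof (cases "j = i")
      case True
      then have "y (2*i) \<le> x" "x \<le> y k" using j i by auto
      then show ?thesis using im i by (cases "x = y k") (auto intro: memI)
    next
      case False
      then have "y (2*j) \<le> x" "x < y (2*j+1)" using j i by auto
      then show ?thesis using j(1) by (blast intro: memI)
    qed
  next
    assume "x \<in> insert (y k) (Uy m y)"
    then consider "x = y k" | j where "j < m" "y (2*j) \<le> x" "x < y (2*j+1)" by (blast elim: memE)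
    then show "x \<in> Uy m (y(k := y k + 1))"
    proof cases
      case 1
      have "(y(k := y k + 1)) (2*i) \<le> x" "x < (y(k := y k + 1)) (2*i+1)" using 1 i mono by auto
      then show ?thesis by (rule memI[OF im])
    next
      case (2 j)
      have "(y(k := y k + 1)) (2*j) \<le> x" "x < (y(k := y k + 1)) (2*j+1)" using 2 i by auto
      then show ?thesis by (rule memI[OF 2(1)])
    qed
  qed
  then have "Uy m (y(k := y k + 1)) = insert (y k) (Uy m y)" by (intro set_eqI)
  then show ?thesis using False by simp
qed

lemma Uy_minus:
  assumes st: "strict_on (2*m) y" and k: "k < 2*m"
  shows "Uy m (y(k := y k - 1)) = (if even k then insert (y k - 1) (Uy m y) else Uy m y - {y k - 1})"
proof (cases "even k")
  case True
  then obtain i where i: "k = 2*i" by (auto elim: evenE)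
  have im: "i < m" using k i by simp
  have lt: "y k < y (2*i+1)" using strict_less_iff[OF st, of k "2*i+1"] i im by simp
  have "x \<in> Uy m (y(k := y k - 1)) \<longleftrightarrow> x \<in> insert (y k - 1) (Uy m y)" for x
  proof
    assume "x \<in> Uy m (y(k := y k - 1))"
    then obtain j where j: "j < m" "(y(k := y k - 1)) (2*j) \<le> x" "x < (y(k := y k - 1)) (2*j+1)"
      by (rule memE)
    show "x \<in> insert (y k - 1) (Uy m y)"
    proof (cases "j = i")
      case True
      then have "y k - 1 \<le> x" "x < y (2*i+1)" using j i by auto
      then show ?thesis using im i by (cases "x = y k - 1") (auto intro: memI)
    next
      case False
      then have "y (2*j) \<le> x" "x < y (2*j+1)" using j i by auto
      then show ?thesis using j(1) by (blast intro: memI)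
    qed
  next
    assume "x \<in> insert (y k - 1) (Uy m y)"
    then consider "x = y k - 1" | j where "j < m" "y (2*j) \<le> x" "x < y (2*j+1)" by (blast elim: memE)
    then show "x \<in> Uy m (y(k := y k - 1))"
    proof cases
      case 1
      have "(y(k := y k - 1)) (2*i) \<le> x" "x < (y(k := y k - 1)) (2*i+1)" using 1 i lt by auto
      then show ?thesis by (rule memI[OF im])
    next
      case (2 j)
      have "(y(k := y k - 1)) (2*j) \<le> x" "x < (y(k := y k - 1)) (2*j+1)" using 2 i by auto
      then show ?thesis by (rule memI[OF 2(1)])
    qed
  qed
  then have "Uy m (y(k := y k - 1)) = insert (y k - 1) (Uy m y)" by (intro set_eqI)
  then show ?thesis using True by simp
next
  case False
  then obtain i where i: "k = 2*i+1" by (auto elim: oddE)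
  have im: "i < m" using k i by simp
  have "x \<in> Uy m (y(k := y k - 1)) \<longleftrightarrow> x \<in> Uy m y - {y k - 1}" for x
  proof
    assume "x \<in> Uy m (y(k := y k - 1))"
    then obtain j where j: "j < m" "(y(k := y k - 1)) (2*j) \<le> x" "x < (y(k := y k - 1)) (2*j+1)"
      by (rule memE)
    show "x \<in> Uy m y - {y k - 1}"
    proof (cases "j = i")
      case True
      then have "y (2*i) \<le> x" "x < y (2*i+1)" "x \<noteq> y k - 1" using j i by auto
      then show ?thesis using im by (blast intro: memI)
    next
      case False
      then have b: "y (2*j) \<le> x" "x < y (2*j+1)" using j i by auto
      have "x \<noteq> y k - 1" using yk1_in_I[OF st k j(1)] b False i by auto
      then show ?thesis using b j(1) by (blast intro: memI)
    qed
  next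
    assume "x \<in> Uy m y - {y k - 1}"
    then obtain j where j: "j < m" "y (2*j) \<le> x" "x < y (2*j+1)" and xk: "x \<noteq> y k - 1" by (blast elim: memE)
    have "(y(k := y k - 1)) (2*j) \<le> x" "x < (y(k := y k - 1)) (2*j+1)" using j xk i by auto
    then show "x \<in> Uy m (y(k := y k - 1))" by (rule memI[OF j(1)])
  qed
  then have "Uy m (y(k := y k - 1)) = Uy m y - {y k - 1}" by (intro set_eqI)
  then show ?thesis using False by simp
qed

lemma strict_mono_all: "strict_on N y \<Longrightarrow> (\<And>i j. i \<le> j \<Longrightarrow> j < N \<Longrightarrow> y i \<le> y j)"
  by (rule strict_mono_le)

lemma shift_plus_mono:
  assumes st: "strict_on N y" and k: "k < N"
  shows "\<And>i j. i \<le> j \<Longrightarrow> j < N \<Longrightarrow> (y(k := y k + 1)) i \<le> (y(k := y k + 1)) j"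
proof -
  fix i j assume ij: "i \<le> j" "j < N"
  show "(y(k := y k + 1)) i \<le> (y(k := y k + 1)) j"
  proof (cases "i = k"; cases "j = k")
    assume "i = k" "j \<noteq> k"
    then have "y k < y j" using strict_less_iff[OF st k ij(2)] ij by simp
    then show ?thesis using \<open>i = k\<close> \<open>j \<noteq> k\<close> by simp
  next
    assume "i \<noteq> k" "j = k"
    then show ?thesis using strict_mono_le[OF st ij] by simp
  next
    assume "i \<noteq> k" "j \<noteq> k"
    then show ?thesis using strict_mono_le[OF st ij] by simp
  qed simp
qed

lemma shift_minus_mono:
  assumes st: "strict_on N y" and k: "k < N"
  shows "\<And>i j. i \<le> j \<Longrightarrow> j < N \<Longrightarrow> (y(k := y k - 1)) i \<le> (y(k := y k - 1)) j"
proof -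
  fix i j assume ij: "i \<le> j" "j < N"
  show "(y(k := y k - 1)) i \<le> (y(k := y k - 1)) j"
  proof (cases "i = k"; cases "j = k")
    assume "i \<noteq> k" "j = k"
    then have "i < k" using ij by simp
    then have "y i < y k" using strict_less_iff[OF st _ k, of i] k by simp
    then show ?thesis using \<open>i \<noteq> k\<close> \<open>j = k\<close> by simp
  next
    assume "i = k" "j \<noteq> k"
    then show ?thesis using strict_mono_le[OF st ij] by simp
  next
    assume "i \<noteq> k" "j \<noteq> k"
    then show ?thesis using strict_mono_le[OF st ij] by simp
  qed simp
qed

lemma gen_Sigma:
  assumes st: "strict_on (2*m) y"
  shows "gen \<theta> p q (Sigma_prod \<theta> m y) \<eta> =
    (\<Sum>k<2*m. q (y k) * (Sigma_prod \<theta> m (y(k := y k + 1)) \<eta> - Sigma_prod \<theta> m y \<eta>)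
             + p (y k) * (Sigma_prod \<theta> m (y(k := y k - 1)) \<eta> - Sigma_prod \<theta> m y \<eta>))"
proof -
  define U where "U = Uy m y"
  define F where "F = (\<lambda>V \<xi>. (- \<theta>) ^ W V \<xi>)"
  have fU: "finite U" unfolding U_def by (rule finite_Uy)
  have SF: "Sigma_prod \<theta> m y = F U"
    unfolding F_def U_def by (rule ext, rule Sigma_W, rule strict_mono_le[OF st])
  have Sp: "Sigma_prod \<theta> m (y(k := y k + 1)) \<eta> = F (if even k then U - {y k} else insert (y k) U) \<eta>"
    if k: "k < 2*m" for k
    using Sigma_W[where m=m and y="y(k := y k + 1)" and \<theta>=\<theta> and \<xi>=\<eta>, OF shift_plus_mono[OF st k]] Uy_plus[OF st k] unfolding F_def U_def by simp
  have Sm: "Sigma_prod \<theta> m (y(k := y k - 1)) \<eta> = F (if even k then insert (y k - 1) U else U - {y k - 1}) \<eta>"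
    if k: "k < 2*m" for k
    using Sigma_W[where m=m and y="y(k := y k - 1)" and \<theta>=\<theta> and \<xi>=\<eta>, OF shift_minus_mono[OF st k]] Uy_minus[OF st k] unfolding F_def U_def by simp
  define T where "T x = q x * (\<theta> * F U (eta_a \<eta> x (x - 1)) + (1 - \<theta>) * F U (eta_c \<eta> x (x - 1)) - F U \<eta>)
      + p x * (\<theta> * F U (eta_a \<eta> (x - 1) x) + (1 - \<theta>) * F U (eta_c \<eta> (x - 1) x) - F U \<eta>)" for x
  have J1: "\<theta> * F U (eta_a \<eta> x (x - 1)) + (1 - \<theta>) * F U (eta_c \<eta> x (x - 1)) - F U \<eta> =
     (if (x \<in> U) = (x - 1 \<in> U) then 0
      else if x \<in> U then F (U - {x}) \<eta> - F U \<eta> else F (insert x U) \<eta> - F U \<eta>)" for x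
    unfolding F_def by (rule jump_gen[OF fU]) simp
  have J2: "\<theta> * F U (eta_a \<eta> (x - 1) x) + (1 - \<theta>) * F U (eta_c \<eta> (x - 1) x) - F U \<eta> =
     (if (x - 1 \<in> U) = (x \<in> U) then 0
      else if x - 1 \<in> U then F (U - {x - 1}) \<eta> - F U \<eta> else F (insert (x - 1) U) \<eta> - F U \<eta>)" for x
    unfolding F_def by (rule jump_gen[OF fU]) simp
  define B where "B = y ` {..<2*m}"
  have fB: "finite B" unfolding B_def by simp
  have T0: "T x = 0" if "x \<notin> B" for x
  proof -
    have "(x \<in> U) = (x - 1 \<in> U)" unfolding U_def by (rule Uy_nonbd) (use that in \<open>simp add: B_def\<close>)
    then show ?thesis unfolding T_def J1 J2 by simp
  qed
  have "gen \<theta> p q (Sigma_prod \<theta> m y) \<eta> = infsum T UNIV"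
    unfolding gen_def SF T_def by simp
  also have "\<dots> = infsum T B"
    by (rule infsum_cong_neutral) (use T0 in auto)
  also have "\<dots> = sum T B" using fB by simp
  also have "\<dots> = (\<Sum>k<2*m. T (y k))"
    unfolding B_def
  proof (rule sum.reindex_cong[OF _ refl refl])
    show "inj_on y {..<2*m}"
    proof (rule inj_onI)
      fix a b assume "a \<in> {..<2*m}" "b \<in> {..<2*m}" "y a = y b"
      then show "a = b" using strict_less_iff[OF st, of a b] strict_less_iff[OF st, of b a]
        by (metis lessThan_iff linorder_neqE_nat order_less_irrefl)
    qed
  qed
  also have "\<dots> = (\<Sum>k<2*m. q (y k) * (Sigma_prod \<theta> m (y(k := y k + 1)) \<eta> - Sigma_prod \<theta> m y \<eta>)
             + p (y k) * (Sigma_prod \<theta> m (y(k := y k - 1)) \<eta> - Sigma_prod \<theta> m y \<eta>))"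
  proof (rule sum.cong[OF refl])
    fix k assume "k \<in> {..<2*m}"
    then have k: "k < 2*m" by simp
    have b1: "(y k \<in> U) = even k" "(y k - 1 \<in> U) = odd k" unfolding U_def using Uy_bd[OF st k] by auto
    show "T (y k) = q (y k) * (Sigma_prod \<theta> m (y(k := y k + 1)) \<eta> - Sigma_prod \<theta> m y \<eta>)
             + p (y k) * (Sigma_prod \<theta> m (y(k := y k - 1)) \<eta> - Sigma_prod \<theta> m y \<eta>)"
      unfolding T_def J1 J2 Sp[OF k] Sm[OF k] SF b1 by simp
  qed
  finally show ?thesis .
qed

lemma local_Sigma: "local_fun (Sigma_prod \<theta> m y)"
  unfolding local_fun_def
proof (rule exI[where x="Uy m y"], intro conjI allI impI)
  show "finite (Uy m y)" by (rule finite_Uy)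
  fix \<eta> \<xi> :: config assume a: "\<forall>x\<in>Uy m y. \<eta> x = \<xi> x"
  have "sigma \<theta> (y (2*i)) (y (2*i+1)) \<eta> = sigma \<theta> (y (2*i)) (y (2*i+1)) \<xi>" if "i < m" for i
  proof -
    have "{x. y (2*i) \<le> x \<and> x < y (2*i+1) \<and> \<eta> x} = {x. y (2*i) \<le> x \<and> x < y (2*i+1) \<and> \<xi> x}"
      using a that by (auto simp: mem_Uy)
    then show ?thesis unfolding sigma_def count_int_def by simp
  qed
  then show "Sigma_prod \<theta> m y \<eta> = Sigma_prod \<theta> m y \<xi>" unfolding Sigma_prod_def by (intro prod.cong) auto
qed

lemma rk_mono: "i \<le> j \<Longrightarrow> rk k i \<le> rk k j" by (auto simp: rk_def)

lemma Uy_red: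
  assumes mono: "\<And>i j. i \<le> j \<Longrightarrow> j < 2 * Suc m \<Longrightarrow> y i \<le> y j"
    and k: "k + 1 < 2 * Suc m" and eq: "y k = y (k+1)"
  shows "Uy (Suc m) y = Uy m (y \<circ> rk k)"
proof (cases "even k")
  case True
  then obtain i where i: "k = 2*i" by (auto elim: evenE)
  have im: "i < Suc m" using k i by simp
  have "x \<in> Uy (Suc m) y \<longleftrightarrow> x \<in> Uy m (y \<circ> rk k)" for x
  proof
    assume "x \<in> Uy (Suc m) y"
    then obtain j where j: "j < Suc m" "y (2*j) \<le> x" "x < y (2*j+1)" by (rule memE)
    have "j \<noteq> i" using j eq i by auto
    show "x \<in> Uy m (y \<circ> rk k)"
    proof (cases "j < i")
      case True
      then have "(y \<circ> rk k) (2*j) \<le> x" "x < (y \<circ> rk k) (2*j+1)" using j i by (auto simp: rk_def)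
      then show ?thesis by (rule memI'[where j=j]) (use True im in simp)
    next
      case False
      then obtain j' where j': "j = Suc j'" using \<open>j \<noteq> i\<close> by (cases j) auto
      then have "(y \<circ> rk k) (2*j') \<le> x" "x < (y \<circ> rk k) (2*j'+1)" using j i False \<open>j \<noteq> i\<close> by (auto simp: rk_def)
      then show ?thesis by (rule memI'[where j=j']) (use j j' in simp)
    qed
  next
    assume "x \<in> Uy m (y \<circ> rk k)"
    then obtain j where j: "j < m" "(y \<circ> rk k) (2*j) \<le> x" "x < (y \<circ> rk k) (2*j+1)" by (rule memE)
    show "x \<in> Uy (Suc m) y"
    proof (cases "j < i")
      case True
      then have "y (2*j) \<le> x" "x < y (2*j+1)" using j i by (auto simp: rk_def)
      then show ?thesis by (rule memI'[where j=j]) (use j in simp)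
    next
      case False
      then have "y (2*(j+1)) \<le> x" "x < y (2*(j+1)+1)" using j i by (auto simp: rk_def)
      then show ?thesis by (rule memI'[where j="j+1"]) (use j in simp)
    qed
  qed
  then show ?thesis by (intro set_eqI)
next
  case False
  then obtain i where i: "k = 2*i+1" by (auto elim: oddE)
  have im: "i < m" using k i by simp
  have m1: "y (2*i) \<le> y (2*i+1)" "y (Suc (Suc (2*i))) \<le> y (Suc (Suc (Suc (2*i))))"
    using mono[of "2*i" "2*i+1"] mono[of "Suc (Suc (2*i))" "Suc (Suc (Suc (2*i)))"] im by auto
  have eq': "y (2*i+1) = y (2*i+2)" using eq i by simp
  have "x \<in> Uy (Suc m) y \<longleftrightarrow> x \<in> Uy m (y \<circ> rk k)" for x
  proof
    assume "x \<in> Uy (Suc m) y"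
    then obtain j where j: "j < Suc m" "y (2*j) \<le> x" "x < y (2*j+1)" by (rule memE)
    consider "j < i" | "j = i" | "j = i+1" | "j > i+1" by linarith
    then show "x \<in> Uy m (y \<circ> rk k)"
    proof cases
      case 1
      then have "(y \<circ> rk k) (2*j) \<le> x" "x < (y \<circ> rk k) (2*j+1)" using j i by (auto simp: rk_def)
      then show ?thesis by (rule memI'[where j=j]) (use 1 im in simp)
    next
      case 2
      then have "(y \<circ> rk k) (2*i) \<le> x" "x < (y \<circ> rk k) (2*i+1)" using j i m1 eq' by (auto simp: rk_def)
      then show ?thesis by (rule memI'[where j=i]) (use im in simp)
    next
      case 3
      then have "(y \<circ> rk k) (2*i) \<le> x" "x < (y \<circ> rk k) (2*i+1)" using j i m1 eq' by (auto simp: rk_def)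
      then show ?thesis by (rule memI'[where j=i]) (use im in simp)
    next
      case 4
      then obtain j' where j': "j = Suc j'" by (cases j) auto
      then have "(y \<circ> rk k) (2*j') \<le> x" "x < (y \<circ> rk k) (2*j'+1)" using j i 4 by (auto simp: rk_def)
      then show ?thesis by (rule memI'[where j=j']) (use j j' in simp)
    qed
  next
    assume "x \<in> Uy m (y \<circ> rk k)"
    then obtain j where j: "j < m" "(y \<circ> rk k) (2*j) \<le> x" "x < (y \<circ> rk k) (2*j+1)" by (rule memE)
    consider "j < i" | "j = i" | "j > i" by linarith
    then show "x \<in> Uy (Suc m) y"
    proof cases
      case 1
      then have "y (2*j) \<le> x" "x < y (2*j+1)" using j i by (auto simp: rk_def)
      then show ?thesis by (rule memI'[where j=j]) (use j in simp)
    next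
      case 2
      then have a: "y (2*i) \<le> x" "x < y (Suc (Suc (Suc (2*i))))" using j i by (auto simp: rk_def)
      show ?thesis
      proof (cases "x < y (2*i+1)")
        case True
        then show ?thesis by (intro memI[of i]) (use a im in auto)
      next
        case False
        then have "y (2*(i+1)) \<le> x" "x < y (2*(i+1)+1)" using a eq' by (auto simp: algebra_simps)
        then show ?thesis by (rule memI'[where j="i+1"]) (use im in simp)
      qed
    next
      case 3
      then have "y (2*(j+1)) \<le> x" "x < y (2*(j+1)+1)" using j i by (auto simp: rk_def)
      then show ?thesis by (rule memI'[where j="j+1"]) (use j in simp)
    qed
  qed
  then show ?thesis by (intro set_eqI)
qed

lemma Sigma_red:
  assumes mono: "\<And>i j. i \<le> j \<Longrightarrow> j < 2 * Suc m \<Longrightarrow> y i \<le> y j"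
    and k: "k + 1 < 2 * Suc m" and eq: "y k = y (k+1)"
  shows "Sigma_prod \<theta> (Suc m) y = Sigma_prod \<theta> m (y \<circ> rk k)"
proof
  fix \<xi>
  have mono': "(y \<circ> rk k) i \<le> (y \<circ> rk k) j" if "i \<le> j" "j < 2 * m" for i j
    using mono[OF rk_mono[OF that(1)]] that by (auto simp: rk_def)
  show "Sigma_prod \<theta> (Suc m) y \<xi> = Sigma_prod \<theta> m (y \<circ> rk k) \<xi>"
    using Sigma_W[where y=y and m="Suc m" and \<theta>=\<theta> and \<xi>=\<xi>, OF mono]
      Sigma_W[where y="y \<circ> rk k" and m=m and \<theta>=\<theta> and \<xi>=\<xi>, OF mono'] Uy_red[OF mono k eq] by simp
qed

definition Kmat :: "(int \<Rightarrow> int \<Rightarrow> real) \<Rightarrow> (nat \<Rightarrow> int) \<Rightarrow> nat \<Rightarrow> nat \<Rightarrow> real" where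
  "Kmat E y = (\<lambda>i j. if i < j then E (y i) (y j) else if j < i then - E (y j) (y i) else 0)"

definition sorted_on :: "nat \<Rightarrow> (nat \<Rightarrow> int) \<Rightarrow> bool" where
  "sorted_on N y \<longleftrightarrow> (\<forall>i j. i \<le> j \<longrightarrow> j < N \<longrightarrow> y i \<le> y j)"

lemma rk_less_iff: "rk k i < rk k j \<longleftrightarrow> i < j" by (auto simp: rk_def)

lemma Kmat_rk: "(\<lambda>i j. Kmat E y (rk k i) (rk k j)) = Kmat E (y \<circ> rk k)"
  unfolding Kmat_def by (intro ext) (simp only: rk_less_iff o_def)

lemma sorted_rk: "sorted_on (2 * Suc m) y \<Longrightarrow> sorted_on (2 * m) (y \<circ> rk k)"
  unfolding sorted_on_def by (auto simp: rk_def)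

lemma pf_Kmat_red:
  assumes k: "k + 1 < 2 * Suc m" and eq: "y k = y (k+1)"
  shows "pfaffian (Suc m) (Kmat E y) = E (y k) (y k) * pfaffian m (Kmat E (y \<circ> rk k))"
proof -
  have "pfaffian (Suc m) (Kmat E y) = Kmat E y k (k+1) * pfaffian m (\<lambda>i j. Kmat E y (rk k i) (rk k j))"
  proof (rule pf_red[OF k])
    fix a assume a: "a < 2 * Suc m" "a \<noteq> k" "a \<noteq> k + 1"
    show "Kmat E y k a = Kmat E y (k + 1) a \<and> Kmat E y a k = Kmat E y a (k + 1)"
      using a eq by (cases "a < k") (auto simp: Kmat_def)
  next
    show "Kmat E y (k + 1) k = - Kmat E y k (k + 1)" by (simp add: Kmat_def)
  qed
  then show ?thesis unfolding Kmat_rk by (simp add: Kmat_def eq)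
qed

lemma count_split: "a < b \<Longrightarrow> count_int \<eta> a b = count_int \<eta> (a+1) b + (if \<eta> a then 1 else 0)"
proof -
  assume ab: "a < b"
  have fin: "finite {x. a + 1 \<le> x \<and> x < b \<and> \<eta> x}" by (rule finite_subset[of _ "{a+1..<b}"]) auto
  show ?thesis
  proof (cases "\<eta> a")
    case True
    then have "{x. a \<le> x \<and> x < b \<and> \<eta> x} = insert a {x. a + 1 \<le> x \<and> x < b \<and> \<eta> x}" using ab by (auto dest: order_le_imp_less_or_eq)
    then show ?thesis using True fin unfolding count_int_def by simp
  next
    case False
    then have "{x. a \<le> x \<and> x < b \<and> \<eta> x} = {x. a + 1 \<le> x \<and> x < b \<and> \<eta> x}" using False by (auto dest: order_le_imp_less_or_eq)
    then show ?thesis using False unfolding count_int_def by simp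
  qed
qed

lemma sigma_split: "a < b \<Longrightarrow> sigma \<theta> a b \<eta> = (- \<theta>) ^ (if \<eta> a then 1 else 0) * sigma \<theta> (a+1) b \<eta>"
  unfolding sigma_def by (simp add: count_split power_add)

lemma sigma_same: "sigma \<theta> a a \<eta> = 1"
proof -
  have e: "{x. a \<le> x \<and> x < a \<and> \<eta> x} = {}" by auto
  show ?thesis unfolding sigma_def count_int_def e by simp
qed

lemma Sigma_Suc: "Sigma_prod \<theta> (Suc m) y \<eta> = sigma \<theta> (y 0) (y 1) \<eta> * Sigma_prod \<theta> m (\<lambda>i. y (i + 2)) \<eta>"
  unfolding Sigma_prod_def by (subst prod.lessThan_Suc_shift) (simp add: algebra_simps)

lemma static_id:
  "sorted_on (2*n) y \<Longrightarrow> Sigma_prod \<theta> n y \<eta> = pfaffian n (Kmat (\<lambda>a b. sigma \<theta> a b \<eta>) y)"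
proof (induction n arbitrary: y)
  case 0
  then show ?case by (simp add: Sigma_prod_def pfaffian_0)
next
  case (Suc m)
  define E where "E = (\<lambda>a b. sigma \<theta> a b \<eta>)"
  have main: "\<And>y. sorted_on (2 * Suc m) y \<Longrightarrow> nat (y 1 - y 0) = g \<Longrightarrow> Sigma_prod \<theta> (Suc m) y \<eta> = pfaffian (Suc m) (Kmat E y)" for g
  proof (induction g)
    case 0
    fix y assume s: "sorted_on (2 * Suc m) y" and g: "nat (y 1 - y 0) = 0"
    have "y 0 \<le> y 1" using s unfolding sorted_on_def by simp
    then have eq: "y 0 = y (0+1)" using g by simp
    have "Sigma_prod \<theta> (Suc m) y = Sigma_prod \<theta> m (y \<circ> rk 0)"
      by (rule Sigma_red[OF _ _ eq]) (use s in \<open>auto simp: sorted_on_def\<close>)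
    moreover have "pfaffian (Suc m) (Kmat E y) = E (y 0) (y 0) * pfaffian m (Kmat E (y \<circ> rk 0))"
      by (rule pf_Kmat_red[OF _ eq]) simp
    moreover have "Sigma_prod \<theta> m (y \<circ> rk 0) \<eta> = pfaffian m (Kmat E (y \<circ> rk 0))"
      unfolding E_def by (rule Suc.IH[OF sorted_rk[OF s]])
    ultimately show "Sigma_prod \<theta> (Suc m) y \<eta> = pfaffian (Suc m) (Kmat E y)"
      by (simp add: E_def sigma_same)
  next
    case (Suc g)
    fix y assume s: "sorted_on (2 * Suc m) y" and g: "nat (y 1 - y 0) = Suc g"
    have lt: "y 0 < y 1" using g by simp
    define y' where "y' = y(0 := y 0 + 1)"
    have s': "sorted_on (2 * Suc m) y'"
      unfolding sorted_on_def
    proof (intro allI impI)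
      fix i j assume ij: "i \<le> j" "j < 2 * Suc m"
      show "y' i \<le> y' j"
      proof (cases "i = 0")
        case True
        then show ?thesis
        proof (cases "j = 0")
          case False
          then have "y 1 \<le> y j" using s ij unfolding sorted_on_def by simp
          then show ?thesis using True False lt by (simp add: y'_def)
        qed (simp add: y'_def)
      next
        case False
        then show ?thesis using s ij unfolding sorted_on_def y'_def by simp
      qed
    qed
    have g': "nat (y' 1 - y' 0) = g" using g by (simp add: y'_def)
    have IH: "Sigma_prod \<theta> (Suc m) y' \<eta> = pfaffian (Suc m) (Kmat E y')" by (rule Suc.IH[OF s' g'])
    define c where "c = (- \<theta>) ^ (if \<eta> (y 0) then 1 else 0)"
    have "Sigma_prod \<theta> (Suc m) y \<eta> = c * Sigma_prod \<theta> (Suc m) y' \<eta>"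
      unfolding Sigma_Suc using sigma_split[OF lt, of \<theta> \<eta>] by (simp add: y'_def c_def)
    moreover have "pfaffian (Suc m) (Kmat E y) = c * pfaffian (Suc m) (Kmat E y')"
    proof (rule pf_scale[where k=0])
      show "0 < 2 * Suc m" by simp
      fix a assume a: "a < 2 * Suc m"
      have "E (y 0) (y a) = c * E (y' 0) (y' a)" if "0 < a"
      proof -
        have "y 1 \<le> y a" using s a that unfolding sorted_on_def by simp
        then show ?thesis using sigma_split[of "y 0" "y a" \<theta> \<eta>] lt that by (simp add: E_def c_def y'_def)
      qed
      then show "Kmat E y 0 a = c * Kmat E y' 0 a" "Kmat E y a 0 = c * Kmat E y' a 0"
        by (auto simp: Kmat_def)
    next
      fix a b :: nat assume "a < 2 * Suc m" "b < 2 * Suc m" "a \<noteq> 0" "b \<noteq> 0"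
      then show "Kmat E y a b = Kmat E y' a b" by (simp add: Kmat_def y'_def)
    qed
    ultimately show "Sigma_prod \<theta> (Suc m) y \<eta> = pfaffian (Suc m) (Kmat E y)" using IH by simp
  qed
  show ?case using main[OF Suc.prems refl] by (simp add: E_def)
qed

lemma zero_from_pow_bound:
  fixes x B :: real
  assumes "\<And>i::nat. \<bar>x\<bar> \<le> B / 2 ^ i"
  shows "x = 0"
proof (rule ccontr)
  assume "x \<noteq> 0"
  then have ax: "\<bar>x\<bar> > 0" by simp
  obtain i :: nat where "B / \<bar>x\<bar> < 2 ^ i" using real_arch_pow[of 2 "B / \<bar>x\<bar>"] by auto
  then have "B < \<bar>x\<bar> * 2 ^ i" using ax by (simp add: divide_less_eq mult.commute)
  then have "B / 2 ^ i < \<bar>x\<bar>" by (simp add: divide_less_eq)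
  with assms[of i] show False by simp
qed

lemma ode_zero:
  fixes d :: "real \<Rightarrow> (nat \<Rightarrow> int) \<Rightarrow> real" and Y Ys :: "(nat \<Rightarrow> int) set"
    and \<alpha> \<beta> :: "int \<Rightarrow> real" and N :: nat and B M :: real
  assumes bnd: "\<And>t y. 0 \<le> t \<Longrightarrow> y \<in> Y \<Longrightarrow> \<bar>d t y\<bar> \<le> B"
    and bdry: "\<And>t y. 0 \<le> t \<Longrightarrow> y \<in> Y \<Longrightarrow> y \<notin> Ys \<Longrightarrow> d t y = 0"
    and init: "\<And>y. y \<in> Y \<Longrightarrow> d 0 y = 0"
    and cont: "\<And>y. y \<in> Ys \<Longrightarrow> continuous_on {0..} (\<lambda>t. d t y)"
    and der: "\<And>y t. y \<in> Ys \<Longrightarrow> 0 < t \<Longrightarrow> ((\<lambda>t. d t y) has_real_derivative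
        (\<Sum>k<N. \<alpha> (y k) * (d t (y(k := y k + 1)) - d t y) + \<beta> (y k) * (d t (y(k := y k - 1)) - d t y))) (at t)"
    and sh: "\<And>y k. y \<in> Ys \<Longrightarrow> k < N \<Longrightarrow> y(k := y k + 1) \<in> Y \<and> y(k := y k - 1) \<in> Y"
    and YsY: "Ys \<subseteq> Y"
    and rates: "\<And>x. 0 \<le> \<alpha> x \<and> \<alpha> x \<le> M \<and> 0 \<le> \<beta> x \<and> \<beta> x \<le> M"
  shows "0 \<le> t \<Longrightarrow> y \<in> Y \<Longrightarrow> d t y = 0"
proof -
  have M0: "0 \<le> M" using rates[of 0] by simp
  define C where "C = 4 * real N * M + 1"
  have C0: "C > 0" using M0 unfolding C_def by (simp add: add_nonneg_pos)
  define T where "T = 1 / (2 * C)"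
  have T0: "T > 0" using C0 by (simp add: T_def)
  have TC: "T * C = 1/2" using C0 by (simp add: T_def)
  have step: "\<And>t y. a \<le> t \<Longrightarrow> t \<le> a + T \<Longrightarrow> y \<in> Y \<Longrightarrow> d t y = 0"
    if a0: "0 \<le> a" and za: "\<And>y. y \<in> Y \<Longrightarrow> d a y = 0" for a
  proof -
    have ind: "\<And>t y. a \<le> t \<Longrightarrow> t \<le> a + T \<Longrightarrow> y \<in> Y \<Longrightarrow> \<bar>d t y\<bar> \<le> B / 2 ^ i" for i :: nat
    proof (induction i)
      case 0
      then show ?case using bnd a0 by simp
    next
      case (Suc i)
      fix t y assume t: "a \<le> t" "t \<le> a + T" and y: "y \<in> Y"
      define X where "X = B / 2 ^ i"
      show "\<bar>d t y\<bar> \<le> B / 2 ^ Suc i"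
      proof (cases "y \<in> Ys")
        case False
        then have "d t y = 0" using bdry[OF _ y] t a0 by simp
        moreover have "0 \<le> B" using bnd[OF a0 y] by simp
        ultimately show ?thesis by simp
      next
        case ys: True
        show ?thesis
        proof (cases "t = a")
          case True
          then have "d t y = 0" using za y by simp
          moreover have "0 \<le> B" using bnd[OF a0 y] by simp
          ultimately show ?thesis by simp
        next
          case False
          then have at: "a < t" using t by simp
          obtain l z where z: "a < z" "z < t" and dz: "((\<lambda>t. d t y) has_real_derivative l) (at z)"
            and eq: "d t y - d a y = (t - a) * l"
          proof -
            have sub: "{a..t} \<subseteq> {0..}" using a0 by auto
            have c: "continuous_on {a..t} (\<lambda>t. d t y)"
              by (rule continuous_on_subset[OF cont[OF ys] sub])
            have "\<And>x. a < x \<Longrightarrow> x < t \<Longrightarrow> (\<lambda>t. d t y) differentiable (at x)"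
            proof -
              fix x assume "a < x" "x < t"
              then have "0 < x" using a0 by simp
              then show "(\<lambda>t. d t y) differentiable (at x)"
                using der[OF ys] real_differentiable_def by blast
            qed
            then show ?thesis using MVT[OF at c] that by blast
          qed
          have z0: "0 < z" using z a0 by simp
          have ld: "l = (\<Sum>k<N. \<alpha> (y k) * (d z (y(k := y k + 1)) - d z y) + \<beta> (y k) * (d z (y(k := y k - 1)) - d z y))"
            using DERIV_unique[OF dz der[OF ys z0]] .
          have zr: "a \<le> z" "z \<le> a + T" using z t by auto
          have bz: "\<bar>d z w\<bar> \<le> X" if "w \<in> Y" for w using Suc.IH[OF zr that] by (simp add: X_def)
          have "\<bar>l\<bar> \<le> (\<Sum>k<N. \<bar>\<alpha> (y k) * (d z (y(k := y k + 1)) - d z y) + \<beta> (y k) * (d z (y(k := y k - 1)) - d z y)\<bar>)"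
            unfolding ld by (rule sum_abs)
          also have "\<dots> \<le> (\<Sum>k<N. 4 * M * X)"
          proof (rule sum_mono)
            fix k assume "k \<in> {..<N}"
            then have k: "k < N" by simp
            have b1: "\<bar>d z (y(k := y k + 1)) - d z y\<bar> \<le> 2 * X"
            proof -
              have "\<bar>d z (y(k := y k + 1))\<bar> \<le> X" using bz sh[OF ys k] by blast
              moreover have "\<bar>d z y\<bar> \<le> X" using bz y by blast
              ultimately show ?thesis using abs_triangle_ineq4[of "d z (y(k := y k + 1))" "d z y"] by linarith
            qed
            have b2: "\<bar>d z (y(k := y k - 1)) - d z y\<bar> \<le> 2 * X"
            proof -
              have "\<bar>d z (y(k := y k - 1))\<bar> \<le> X" using bz sh[OF ys k] by blast
              moreover have "\<bar>d z y\<bar> \<le> X" using bz y by blast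
              ultimately show ?thesis using abs_triangle_ineq4[of "d z (y(k := y k - 1))" "d z y"] by linarith
            qed
            have r: "0 \<le> \<alpha> (y k)" "\<alpha> (y k) \<le> M" "0 \<le> \<beta> (y k)" "\<beta> (y k) \<le> M" using rates by auto
            have "\<bar>\<alpha> (y k) * (d z (y(k := y k + 1)) - d z y)\<bar> \<le> M * (2 * X)"
            proof -
              have "\<bar>\<alpha> (y k)\<bar> \<le> M" using r by simp
              from mult_mono[OF this b1] show ?thesis using M0 by (simp add: abs_mult)
            qed
            moreover have "\<bar>\<beta> (y k) * (d z (y(k := y k - 1)) - d z y)\<bar> \<le> M * (2 * X)"
            proof -
              have "\<bar>\<beta> (y k)\<bar> \<le> M" using r by simp
              from mult_mono[OF this b2] show ?thesis using M0 by (simp add: abs_mult)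
            qed
            ultimately show "\<bar>\<alpha> (y k) * (d z (y(k := y k + 1)) - d z y) + \<beta> (y k) * (d z (y(k := y k - 1)) - d z y)\<bar> \<le> 4 * M * X"
              using abs_triangle_ineq[of "\<alpha> (y k) * (d z (y(k := y k + 1)) - d z y)" "\<beta> (y k) * (d z (y(k := y k - 1)) - d z y)"] by linarith
          qed
          also have "\<dots> = 4 * real N * M * X" by simp
          also have "\<dots> \<le> C * X"
          proof -
            have "0 \<le> X" using bz[OF y] by simp
            then show ?thesis unfolding C_def by (simp add: distrib_right)
          qed
          finally have bl: "\<bar>l\<bar> \<le> C * X" .
          have "\<bar>d t y\<bar> = (t - a) * \<bar>l\<bar>" using eq za[OF y] at by (simp add: abs_mult)
          also have "\<dots> \<le> T * (C * X)"
            using bl t at by (intro mult_mono) auto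
          also have "\<dots> = X / 2" using TC by (simp add: algebra_simps)
          finally show ?thesis by (simp add: X_def)
        qed
      qed
    qed
    fix t y assume "a \<le> t" "t \<le> a + T" "y \<in> Y"
    then show "d t y = 0" using zero_from_pow_bound[of "d t y" B] ind by blast
  qed
  have all: "\<And>t y. 0 \<le> t \<Longrightarrow> t \<le> real j * T \<Longrightarrow> y \<in> Y \<Longrightarrow> d t y = 0" for j :: nat
  proof (induction j)
    case 0
    then show ?case using init by simp
  next
    case (Suc j)
    fix t y assume t: "0 \<le> t" "t \<le> real (Suc j) * T" and y: "y \<in> Y"
    show "d t y = 0"
    proof (cases "t \<le> real j * T")
      case True
      then show ?thesis using Suc.IH t y by blast
    next
      case False
      have a0: "0 \<le> real j * T" using T0 by simp
      have "d t y = 0" if "real j * T \<le> t" "t \<le> real j * T + T"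
        by (rule step[OF a0 _ that y]) (use Suc.IH a0 in auto)
      then show ?thesis using False t by (simp add: algebra_simps)
    qed
  qed
  assume t: "0 \<le> t" and y: "y \<in> Y"
  obtain j :: nat where "t / T \<le> real j" using real_arch_simple by blast
  then have "t \<le> real j * T" using T0 by (simp add: divide_le_eq)
  then show "d t y = 0" using all t y by blast
qed

lemma sum_two:
  fixes f :: "nat \<Rightarrow> real"
  assumes "a \<noteq> b" "a < N" "b < N" "\<And>k. k < N \<Longrightarrow> k \<noteq> a \<Longrightarrow> k \<noteq> b \<Longrightarrow> f k = 0"
  shows "(\<Sum>k<N. f k) = f a + f b"
proof -
  have "(\<Sum>k<N. f k) = f a + (\<Sum>k\<in>{..<N}-{a}. f k)" using assms(2) by (simp add: sum.remove)
  also have "(\<Sum>k\<in>{..<N}-{a}. f k) = f b + (\<Sum>k\<in>{..<N}-{a}-{b}. f k)"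
    using assms(1,3) by (subst sum.remove[of _ b]) auto
  also have "(\<Sum>k\<in>{..<N}-{a}-{b}. f k) = 0" using assms(4) by (intro sum.neutral) auto
  finally show ?thesis by simp
qed

lemma Sigma_one: "Sigma_prod \<theta> 1 f = sigma \<theta> (f 0) (f 1)"
  unfolding Sigma_prod_def by (rule ext) simp

lemma Sigma_one': "Sigma_prod \<theta> (Suc 0) f = sigma \<theta> (f 0) (f 1)"
  using Sigma_one by simp

lemma sigma_abs: "0 \<le> \<theta> \<Longrightarrow> \<theta> \<le> 1 \<Longrightarrow> \<bar>sigma \<theta> a b \<xi>\<bar> \<le> 1"
  unfolding sigma_def by (simp add: power_abs power_le_one)

lemma Sigma_abs: "0 \<le> \<theta> \<Longrightarrow> \<theta> \<le> 1 \<Longrightarrow> \<bar>Sigma_prod \<theta> m y \<xi>\<bar> \<le> 1"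
  unfolding Sigma_prod_def abs_prod by (rule prod_le_1) (use sigma_abs in auto)

lemma sigma_local: "local_fun (sigma \<theta> a b)"
  using local_Sigma[of \<theta> 1 "\<lambda>i. if i = 0 then a else b"] by (simp add: Sigma_one')

lemma pf_cont:
  assumes "\<And>a b. continuous_on T (\<lambda>t. M t a b)"
  shows "continuous_on T (\<lambda>t. pfaffian n (M t))"
  unfolding pfaffian_def by (intro continuous_intros assms)

lemma nonstrict:
  assumes "sorted_on N y" "\<not> strict_on N y"
  shows "\<exists>k. k + 1 < N \<and> y k = y (k+1)"
proof -
  obtain i j where ij: "i < j" "j < N" "\<not> y i < y j" using assms(2) unfolding strict_on_def by blast
  have "y i \<le> y (i+1)" "y (i+1) \<le> y j" using assms(1) ij unfolding sorted_on_def by auto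
  then have "y i = y (i+1)" using ij by simp
  then show ?thesis using ij by (intro exI[of _ i]) simp
qed

context msg
begin

lemma S_sum1:
  assumes t: "0 \<le> t" and "finite K" and F: "\<And>k. k \<in> K \<Longrightarrow> continuous_on UNIV (F k)"
  shows "S t (\<lambda>\<xi>. \<Sum>k\<in>K. F k \<xi>) \<eta> = (\<Sum>k\<in>K. S t (F k) \<eta>)"
  using S_sum[OF t assms(2) F, where c="\<lambda>_. 1" and \<eta>=\<eta>] by simp

lemma S_term:
  assumes t: "0 \<le> t" and A: "continuous_on UNIV A" and B: "continuous_on UNIV B" and C: "continuous_on UNIV C"
  shows "S t (\<lambda>\<xi>. a * (A \<xi> - B \<xi>) + b * (C \<xi> - B \<xi>)) \<eta> = a * (S t A \<eta> - S t B \<eta>) + b * (S t C \<eta> - S t B \<eta>)"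
proof -
  have "S t (\<lambda>\<xi>. a * (A \<xi> - B \<xi>) + b * (C \<xi> - B \<xi>)) \<eta> = a * S t (\<lambda>\<xi>. A \<xi> - B \<xi>) \<eta> + b * S t (\<lambda>\<xi>. C \<xi> - B \<xi>) \<eta>"
    by (rule S_lin[OF t]; use A B C in \<open>intro continuous_intros\<close>)
  also have "\<dots> = a * (S t A \<eta> - S t B \<eta>) + b * (S t C \<eta> - S t B \<eta>)"
    using S_diff[OF t A B] S_diff[OF t C B] by simp
  finally show ?thesis .
qed

lemma Sig_cont: "continuous_on UNIV (Sigma_prod \<theta>' m y)"
  by (rule local_fun_cont[OF local_Sigma])

lemma u_deriv:
  assumes st: "strict_on (2*n) y" and t: "0 < t"
  shows "((\<lambda>s. S s (Sigma_prod \<theta> n y) \<eta>) has_real_derivative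
     (\<Sum>k<2*n. q (y k) * (S t (Sigma_prod \<theta> n (y(k := y k + 1))) \<eta> - S t (Sigma_prod \<theta> n y) \<eta>)
             + p (y k) * (S t (Sigma_prod \<theta> n (y(k := y k - 1))) \<eta> - S t (Sigma_prod \<theta> n y) \<eta>))) (at t)"
proof -
  have g: "gen \<theta> p q (Sigma_prod \<theta> n y) = (\<lambda>\<xi>. \<Sum>k<2*n. q (y k) * (Sigma_prod \<theta> n (y(k := y k + 1)) \<xi> - Sigma_prod \<theta> n y \<xi>)
             + p (y k) * (Sigma_prod \<theta> n (y(k := y k - 1)) \<xi> - Sigma_prod \<theta> n y \<xi>))"
    by (rule ext) (rule gen_Sigma[OF st])
  have gc: "continuous_on UNIV (gen \<theta> p q (Sigma_prod \<theta> n y))"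
    unfolding g by (intro continuous_intros Sig_cont)
  have "S t (gen \<theta> p q (Sigma_prod \<theta> n y)) \<eta> = (\<Sum>k<2*n. S t (\<lambda>\<xi>. q (y k) * (Sigma_prod \<theta> n (y(k := y k + 1)) \<xi> - Sigma_prod \<theta> n y \<xi>)
             + p (y k) * (Sigma_prod \<theta> n (y(k := y k - 1)) \<xi> - Sigma_prod \<theta> n y \<xi>)) \<eta>)"
    unfolding g using t by (intro S_sum1) (auto intro!: continuous_intros Sig_cont)
  also have "\<dots> = (\<Sum>k<2*n. q (y k) * (S t (Sigma_prod \<theta> n (y(k := y k + 1))) \<eta> - S t (Sigma_prod \<theta> n y) \<eta>)
             + p (y k) * (S t (Sigma_prod \<theta> n (y(k := y k - 1))) \<eta> - S t (Sigma_prod \<theta> n y) \<eta>))"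
    using t by (intro sum.cong refl S_term Sig_cont) auto
  finally have e: "S t (gen \<theta> p q (Sigma_prod \<theta> n y)) \<eta> = \<dots>" .
  show ?thesis unfolding e[symmetric] by (rule S_deriv[OF local_Sigma gc t])
qed

definition E2 :: "real \<Rightarrow> config \<Rightarrow> int \<Rightarrow> int \<Rightarrow> real" where
  "E2 t \<eta> a b = S t (sigma \<theta> a b) \<eta>"

lemma E2_deriv:
  assumes ab: "a < b" and t: "0 < t"
  shows "((\<lambda>s. E2 s \<eta> a b) has_real_derivative
     q a * (E2 t \<eta> (a+1) b - E2 t \<eta> a b) + p a * (E2 t \<eta> (a-1) b - E2 t \<eta> a b)
   + (q b * (E2 t \<eta> a (b+1) - E2 t \<eta> a b) + p b * (E2 t \<eta> a (b-1) - E2 t \<eta> a b))) (at t)"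
proof -
  define y2 where "y2 = (\<lambda>i::nat. if i = 0 then a else b)"
  have st: "strict_on (2*1) y2" unfolding strict_on_def y2_def using ab by auto
  have "((\<lambda>s. S s (Sigma_prod \<theta> 1 y2) \<eta>) has_real_derivative
     (\<Sum>k<2*1. q (y2 k) * (S t (Sigma_prod \<theta> 1 (y2(k := y2 k + 1))) \<eta> - S t (Sigma_prod \<theta> 1 y2) \<eta>)
             + p (y2 k) * (S t (Sigma_prod \<theta> 1 (y2(k := y2 k - 1))) \<eta> - S t (Sigma_prod \<theta> 1 y2) \<eta>))) (at t)"
    by (rule u_deriv[OF st t])
  then show ?thesis by (simp add: Sigma_one Sigma_one' y2_def E2_def numeral_2_eq_2)
qed

end

context msg
begin

lemma v_deriv:
  assumes st: "strict_on (2*n) y" and t: "0 < t"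
  shows "((\<lambda>s. pfaffian n (Kmat (E2 s \<eta>) y)) has_real_derivative
     (\<Sum>k<2*n. q (y k) * (pfaffian n (Kmat (E2 t \<eta>) (y(k := y k + 1))) - pfaffian n (Kmat (E2 t \<eta>) y))
             + p (y k) * (pfaffian n (Kmat (E2 t \<eta>) (y(k := y k - 1))) - pfaffian n (Kmat (E2 t \<eta>) y)))) (at t)"
proof (rule pf_deriv[where M="\<lambda>s. Kmat (E2 s \<eta>) y" and tt=t
      and Mp="\<lambda>k. Kmat (E2 t \<eta>) (y(k := y k + 1))" and Mm="\<lambda>k. Kmat (E2 t \<eta>) (y(k := y k - 1))"
      and \<alpha>="\<lambda>k. q (y k)" and \<beta>="\<lambda>k. p (y k)"])
  fix k a b :: nat assume "a \<noteq> k" "b \<noteq> k"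
  then show "Kmat (E2 t \<eta>) (y(k := y k + 1)) a b = Kmat (E2 t \<eta>) y a b"
    "Kmat (E2 t \<eta>) (y(k := y k - 1)) a b = Kmat (E2 t \<eta>) y a b" by (simp_all add: Kmat_def)
next
  fix a b :: nat assume ab: "a < 2*n" "b < 2*n" "a \<noteq> b"
  define f where "f k = q (y k) * (Kmat (E2 t \<eta>) (y(k := y k + 1)) a b - Kmat (E2 t \<eta>) y a b)
      + p (y k) * (Kmat (E2 t \<eta>) (y(k := y k - 1)) a b - Kmat (E2 t \<eta>) y a b)" for k
  have s2: "(\<Sum>k<2*n. f k) = f a + f b"
    by (rule sum_two[OF ab(3) ab(1) ab(2)]) (simp add: f_def Kmat_def)
  show "((\<lambda>s. Kmat (E2 s \<eta>) y a b) has_real_derivative (\<Sum>k<2*n. f k)) (at t)"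
  proof (cases "a < b")
    case True
    have lt: "y a < y b" using strict_less_iff[OF st ab(1) ab(2)] True by simp
    have "((\<lambda>s. E2 s \<eta> (y a) (y b)) has_real_derivative
       q (y a) * (E2 t \<eta> (y a + 1) (y b) - E2 t \<eta> (y a) (y b)) + p (y a) * (E2 t \<eta> (y a - 1) (y b) - E2 t \<eta> (y a) (y b))
     + (q (y b) * (E2 t \<eta> (y a) (y b + 1) - E2 t \<eta> (y a) (y b)) + p (y b) * (E2 t \<eta> (y a) (y b - 1) - E2 t \<eta> (y a) (y b)))) (at t)"
      by (rule E2_deriv[OF lt t])
    then show ?thesis unfolding s2 using True ab(3) by (simp add: f_def Kmat_def)
  next
    case False
    then have ba: "b < a" using ab(3) by simp
    have lt: "y b < y a" using strict_less_iff[OF st ab(2) ab(1)] ba by simp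
    have "((\<lambda>s. - E2 s \<eta> (y b) (y a)) has_real_derivative
       - (q (y b) * (E2 t \<eta> (y b + 1) (y a) - E2 t \<eta> (y b) (y a)) + p (y b) * (E2 t \<eta> (y b - 1) (y a) - E2 t \<eta> (y b) (y a))
     + (q (y a) * (E2 t \<eta> (y b) (y a + 1) - E2 t \<eta> (y b) (y a)) + p (y a) * (E2 t \<eta> (y b) (y a - 1) - E2 t \<eta> (y b) (y a))))) (at t)"
      by (rule DERIV_minus[OF E2_deriv[OF lt t]])
    then show ?thesis unfolding s2 using ba ab(3) by (simp add: f_def Kmat_def algebra_simps)
  qed
qed

end

context msg
begin

lemma sigma_cont: "continuous_on UNIV (sigma \<theta>' a b)"
  by (rule local_fun_cont[OF sigma_local])

lemma E2_bound: "0 \<le> \<theta> \<Longrightarrow> \<theta> \<le> 1 \<Longrightarrow> 0 \<le> t \<Longrightarrow> \<bar>E2 t \<eta> a b\<bar> \<le> 1"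
  unfolding E2_def by (rule S_bound[OF _ sigma_cont sigma_abs]) auto

lemma Kmat_bound: "0 \<le> \<theta> \<Longrightarrow> \<theta> \<le> 1 \<Longrightarrow> 0 \<le> t \<Longrightarrow> \<bar>Kmat (E2 t \<eta>) y a b\<bar> \<le> 1"
  unfolding Kmat_def using E2_bound[of t \<eta>] by auto

lemma Kmat_cont: "continuous_on {0..} (\<lambda>t. Kmat (E2 t \<eta>) y a b)"
proof -
  have c: "continuous_on {0..} (\<lambda>t. E2 t \<eta> u v)" for u v
    unfolding E2_def by (rule S_tcont_on[OF sigma_cont]) simp
  show ?thesis unfolding Kmat_def
    by (cases "a < b"; cases "b < a") (auto intro!: continuous_intros c)
qed

lemma E2_same: "0 \<le> t \<Longrightarrow> E2 t \<eta> a a = 1"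
proof -
  assume t: "0 \<le> t"
  have "sigma \<theta> a a = (\<lambda>_. 1)" by (rule ext) (rule sigma_same)
  then show ?thesis unfolding E2_def using S_const[OF t] by simp
qed

lemma E2_zero: "E2 0 \<eta> = (\<lambda>a b. sigma \<theta> a b \<eta>)"
  unfolding E2_def using S_zero[OF sigma_cont] by (intro ext) simp

theorem dyn:
  assumes th: "0 \<le> \<theta>" "\<theta> \<le> 1" and rates: "\<And>x. 0 \<le> q x \<and> q x \<le> M \<and> 0 \<le> p x \<and> p x \<le> M"
  shows "sorted_on (2*n) y \<Longrightarrow> 0 \<le> t \<Longrightarrow> S t (Sigma_prod \<theta> n y) \<eta> = pfaffian n (Kmat (E2 t \<eta>) y)"
proof (induction n arbitrary: y t)
  case 0
  have "Sigma_prod \<theta> 0 y = (\<lambda>_. 1)" unfolding Sigma_prod_def by simp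
  then show ?case using S_one[OF "0.prems"(2)] by (simp add: pfaffian_0)
next
  case (Suc m)
  define d where "d t y = S t (Sigma_prod \<theta> (Suc m) y) \<eta> - pfaffian (Suc m) (Kmat (E2 t \<eta>) y)" for t y
  have "d t y = 0"
  proof (rule ode_zero[where Y = "{y. sorted_on (2*Suc m) y}" and Ys = "{y. strict_on (2*Suc m) y}"
        and N = "2*Suc m" and \<alpha> = q and \<beta> = p and B = "1 + fact (2*Suc m)" and M = M and d = d and t = t and y = y])
    show "0 \<le> t" by (rule Suc.prems(2))
    show "y \<in> {y. sorted_on (2*Suc m) y}" using Suc.prems(1) by simp
    show "\<And>x. 0 \<le> q x \<and> q x \<le> M \<and> 0 \<le> p x \<and> p x \<le> M" by (rule rates)
    show "{y. strict_on (2*Suc m) y} \<subseteq> {y. sorted_on (2*Suc m) y}"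
      unfolding sorted_on_def using strict_mono_le by blast
  next
    fix t :: real and y :: "nat \<Rightarrow> int" assume t: "0 \<le> t" and y: "y \<in> {y. sorted_on (2*Suc m) y}"
    have u: "\<bar>S t (Sigma_prod \<theta> (Suc m) y) \<eta>\<bar> \<le> 1"
      by (rule S_bound[OF t Sig_cont Sigma_abs[OF th]])
    have v: "\<bar>pfaffian (Suc m) (Kmat (E2 t \<eta>) y)\<bar> \<le> fact (2*Suc m)"
      by (rule pf_bound) (rule Kmat_bound[OF th t])
    show "\<bar>d t y\<bar> \<le> 1 + fact (2*Suc m)" unfolding d_def using u v by linarith
  next
    fix t :: real and y :: "nat \<Rightarrow> int" assume t: "0 \<le> t" and y: "y \<in> {y. sorted_on (2*Suc m) y}" and ns: "y \<notin> {y. strict_on (2*Suc m) y}"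
    have s: "sorted_on (2*Suc m) y" using y by simp
    obtain k where k: "k + 1 < 2 * Suc m" "y k = y (k+1)" using nonstrict[OF s] ns by auto
    have mono: "\<And>i j. i \<le> j \<Longrightarrow> j < 2 * Suc m \<Longrightarrow> y i \<le> y j" using s unfolding sorted_on_def by blast
    have "S t (Sigma_prod \<theta> (Suc m) y) \<eta> = S t (Sigma_prod \<theta> m (y \<circ> rk k)) \<eta>"
      using Sigma_red[OF mono k] by simp
    also have "\<dots> = pfaffian m (Kmat (E2 t \<eta>) (y \<circ> rk k))" by (rule Suc.IH[OF sorted_rk[OF s] t])
    also have "\<dots> = pfaffian (Suc m) (Kmat (E2 t \<eta>) y)"
      using pf_Kmat_red[OF k, of "E2 t \<eta>"] E2_same[OF t] by simp
    finally show "d t y = 0" unfolding d_def by simp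
  next
    fix y :: "nat \<Rightarrow> int" assume y: "y \<in> {y. sorted_on (2*Suc m) y}"
    have "S 0 (Sigma_prod \<theta> (Suc m) y) \<eta> = Sigma_prod \<theta> (Suc m) y \<eta>" using S_zero[OF Sig_cont] by simp
    also have "\<dots> = pfaffian (Suc m) (Kmat (\<lambda>a b. sigma \<theta> a b \<eta>) y)" using static_id y by simp
    finally show "d 0 y = 0" unfolding d_def E2_zero by simp
  next
    fix y :: "nat \<Rightarrow> int" assume y: "y \<in> {y. strict_on (2*Suc m) y}"
    show "continuous_on {0..} (\<lambda>t. d t y)" unfolding d_def
      by (intro continuous_intros S_tcont_on[OF Sig_cont] pf_cont Kmat_cont) simp
  next
    fix y :: "nat \<Rightarrow> int" and k :: nat assume y: "y \<in> {y. strict_on (2*Suc m) y}" and k: "k < 2 * Suc m"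
    have st: "strict_on (2*Suc m) y" using y by simp
    show "y(k := y k + 1) \<in> {y. sorted_on (2*Suc m) y} \<and> y(k := y k - 1) \<in> {y. sorted_on (2*Suc m) y}"
      using shift_plus_mono[OF st k] shift_minus_mono[OF st k] unfolding sorted_on_def by auto
  next
    fix y :: "nat \<Rightarrow> int" and t :: real assume y: "y \<in> {y. strict_on (2*Suc m) y}" and t: "0 < t"
    have st: "strict_on (2*Suc m) y" using y by simp
    have "((\<lambda>t. d t y) has_real_derivative
      (\<Sum>k<2*Suc m. q (y k) * (S t (Sigma_prod \<theta> (Suc m) (y(k := y k + 1))) \<eta> - S t (Sigma_prod \<theta> (Suc m) y) \<eta>)
             + p (y k) * (S t (Sigma_prod \<theta> (Suc m) (y(k := y k - 1))) \<eta> - S t (Sigma_prod \<theta> (Suc m) y) \<eta>))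
     - (\<Sum>k<2*Suc m. q (y k) * (pfaffian (Suc m) (Kmat (E2 t \<eta>) (y(k := y k + 1))) - pfaffian (Suc m) (Kmat (E2 t \<eta>) y))
             + p (y k) * (pfaffian (Suc m) (Kmat (E2 t \<eta>) (y(k := y k - 1))) - pfaffian (Suc m) (Kmat (E2 t \<eta>) y)))) (at t)"
      unfolding d_def by (rule DERIV_diff[OF u_deriv[OF st t] v_deriv[OF st t]])
    then show "((\<lambda>t. d t y) has_real_derivative
        (\<Sum>k<2*Suc m. q (y k) * (d t (y(k := y k + 1)) - d t y) + p (y k) * (d t (y(k := y k - 1)) - d t y))) (at t)"
      by (rule DERIV_cong) (unfold d_def sum_subtractf[symmetric], rule sum.cong, simp_all add: algebra_simps)
  qed
  then show ?case unfolding d_def by simp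
qed

end

theorem lemma2:
  fixes \<theta> :: real and p q :: "int \<Rightarrow> real"
    and S :: "real \<Rightarrow> (config \<Rightarrow> real) \<Rightarrow> config \<Rightarrow> real"
    and \<eta> :: config and n :: nat and y :: "nat \<Rightarrow> int" and t :: real
  assumes "0 \<le> \<theta>" and "\<theta> \<le> 1"
    and "\<forall>x. 0 \<le> p x" and "\<forall>x. 0 \<le> q x"
    and "\<exists>M. \<forall>x. p x \<le> M \<and> q x \<le> M"
    and "markov_semigroup_gen \<theta> p q S"
    and "1 \<le> n"
    and "\<forall>i j. i \<le> j \<and> j < 2 * n \<longrightarrow> y i \<le> y j"
    and "0 \<le> t"
  shows "S t (Sigma_prod \<theta> n y) \<eta> =
         pfaffian n (\<lambda>i j. if i < j then S t (sigma \<theta> (y i) (y j)) \<eta>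
                           else if j < i then - S t (sigma \<theta> (y j) (y i)) \<eta>
                           else 0)"
proof -
  interpret msg \<theta> p q S by (unfold_locales) (rule assms(6))
  obtain M where M: "\<forall>x. p x \<le> M \<and> q x \<le> M" using assms(5) by blast
  have rates: "\<And>x. 0 \<le> q x \<and> q x \<le> M \<and> 0 \<le> p x \<and> p x \<le> M" using M assms(3,4) by blast
  have s: "sorted_on (2*n) y" using assms(8) unfolding sorted_on_def by blast
  have "S t (Sigma_prod \<theta> n y) \<eta> = pfaffian n (Kmat (E2 t \<eta>) y)"
    by (rule dyn[OF assms(1,2) rates s assms(9)])
  moreover have "Kmat (E2 t \<eta>) y = (\<lambda>i j. if i < j then S t (sigma \<theta> (y i) (y j)) \<eta>
                           else if j < i then - S t (sigma \<theta> (y j) (y i)) \<eta> else 0)"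
    unfolding Kmat_def E2_def by simp
  ultimately show ?thesis by simp
qed

end
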